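(* Let $n\ge2$ and let $X_1,\dots,X_n$ be real-valued (possibly dependent) random variables with order statistics $X_{1:n}\le\cdots\le X_{n:n}$, satisfying one of the following: (A) the distribution function of $X_{n:n}$ has infinite upper endpoint, $X_{n:n}\in\mathrm{GMDA}(h)$ for some positive $h$, and $$\lim_{x\to\infty}\frac{\mathbb{P}(|X_i|>t h(x),X_j>x)}{\mathbb{P}(X_{n:n}>x)}=0\ \text{for all }1\le i\ne j\le n,\ t>0,\qquad(\ast)$$ $$\lim_{x\to\infty}\frac{\mathbb{P}(X_i>Lh(x),X_j>Lh(x))}{\mathbb{P}(X_{n:n}>x)}=0\ \text{for all }1\le i<j\le n\text{ and some }L>0;\qquad(\ast\ast)$$ (B) $X_{n:n}\in\mathcal{L}$ and there exists $h\in\mathcal{H}_{X_{n:n}}$ such that $(\ast)$ and $(\ast\ast)$ hold; (C) $X_{n:n}\in\mathcal{L}\cap\mathcal{D}$ and there exists a dominatedly varying $h\in\mathcal{H}_{X_{n:n}}$ such that $(\ast)$ holds. Let $C_0,\dots,C_{n-1}$ be arbitrarily dependent random variables, independent of $(X_1,\dots,X_n)$, with $\mathbb{P}(a\le C_0\le b)=1$ and $\mathbb{P}(0\le C_i\le d)=1$ for $1\le i\le n-1$, where $0<a\le b<\infty$, $0\le d<\infty$. Then $$\mathbb{P}\Big(\sum_{i=0}^{n-1}C_iX_{n-i:n}>x\Big)\sim\mathbb{P}(C_0X_{n:n}>x)\sim\sum_{i=1}^n\mathbb{P}(C_0X_i>x),\qquad x\to\infty.$$ If moreover $X_1,\dots,X_n$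 are nonnegative, the same conclusion holds when instead $\mathbb{P}(a\le C_0\le b)=\mathbb{P}(|C_i|\le d)=1$ for $1\le i\le n-1$.
   Context: Real-valued random variables are assumed not concentrated on $(-\infty,0]$. For a distribution function $F$, $\overline{F}=1-F$, $x_F=\sup\{x:F(x)<1\}$. $F\in\mathrm{GMDA}(h)$ means $\lim_{x\to x_F}\overline{F}(x+yh(x))/\overline{F}(x)=e^{-y}$ for all $y\in\mathbb{R}$. $F\in\mathcal{L}$ means $\overline{F}(x)>0$ for all $x\ge0$ and $\overline{F}(x+y)\sim\overline{F}(x)$ for every $y\in\mathbb{R}$. $F\in\mathcal{D}$ means $\overline{F}$ is dominatedly varying; a positive $g$ is dominatedly varying if $0<\liminf g(xy)/g(x)\le\limsup g(xy)/g(x)<\infty$ as $x\to\infty$ for every $y>0$. For $F\in\mathcal{L}$, $\mathcal{H}_F$ is the set of eventually positive $h$ with $h(x)=o(x)$, $\overline{F}(x+yh(x))\sim\overline{F}(x)$ for all $y\in\mathbb{R}$, and $\limsup_{x\to\infty}h(x+yh(x))/h(x)<\infty$ for all $y\in\mathbb{R}$. $a\sim b$ means $a(x)/b(x)\to1$ as $x\to\infty$. *)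

theory Defs
  imports "HOL-Probability.Probability" "HOL-Library.Landau_Symbols"
begin

definition ord_stat :: "(nat \<Rightarrow> 'a \<Rightarrow> real) \<Rightarrow> nat \<Rightarrow> nat \<Rightarrow> 'a \<Rightarrow> real" where
  "ord_stat X n k w = sort (map (\<lambda>i. X i w) [1..<Suc n]) ! (k - 1)"

definition tail :: "'a measure \<Rightarrow> ('a \<Rightarrow> real) \<Rightarrow> real \<Rightarrow> real" where
  "tail M Y x = measure M {w \<in> space M. Y w > x}"

definition upper_endpoint :: "(real \<Rightarrow> real) \<Rightarrow> ereal" where
  "upper_endpoint Fb = Sup {ereal x | x. Fb x > 0}"

definition GMDA :: "(real \<Rightarrow> real) \<Rightarrow> (real \<Rightarrow> real) \<Rightarrow> bool" where
  "GMDA Fb h \<longleftrightarrow> (\<forall>y. ((\<lambda>x. Fb (x + y * h x) / Fb x) \<longlongrightarrow> exp (- y))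
      (if upper_endpoint Fb = \<infinity> then at_top else at_left (real_of_ereal (upper_endpoint Fb))))"

definition long_tailed :: "(real \<Rightarrow> real) \<Rightarrow> bool" where
  "long_tailed Fb \<longleftrightarrow> (\<forall>x\<ge>0. Fb x > 0) \<and> (\<forall>y. (\<lambda>x. Fb (x + y)) \<sim>[at_top] Fb)"

definition dominatedly_varying :: "(real \<Rightarrow> real) \<Rightarrow> bool" where
  "dominatedly_varying g \<longleftrightarrow> (eventually (\<lambda>x. g x > 0) at_top) \<and>
     (\<forall>y>0. 0 < Liminf at_top (\<lambda>x. ereal (g (x * y) / g x)) \<and>
            Liminf at_top (\<lambda>x. ereal (g (x * y) / g x)) \<le> Limsup at_top (\<lambda>x. ereal (g (x * y) / g x)) \<and>
            Limsup at_top (\<lambda>x. ereal (g (x * y) / g x)) < \<infinity>)"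

definition H_class :: "(real \<Rightarrow> real) \<Rightarrow> (real \<Rightarrow> real) \<Rightarrow> bool" where
  "H_class Fb h \<longleftrightarrow> (eventually (\<lambda>x. h x > 0) at_top) \<and> h \<in> o[at_top](\<lambda>x. x) \<and>
     (\<forall>y. (\<lambda>x. Fb (x + y * h x)) \<sim>[at_top] Fb) \<and>
     (\<forall>y. Limsup at_top (\<lambda>x. ereal (h (x + y * h x) / h x)) < \<infinity>)"

end

theory Submission
  imports Defs
begin

lemma sorted_nth_gt_iff:
  fixes ys :: "real list"
  shows "sorted ys \<Longrightarrow> p < length ys \<Longrightarrow>
    (t < ys ! p) \<longleftrightarrow> length ys - p \<le> length (filter (\<lambda>y. t < y) ys)"
proof (induction ys arbitrary: p)
  case Nil then show ?case by simp
next
  case (Cons x xs)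
  have allge: "\<forall>y\<in>set xs. x \<le> y" using Cons.prems(1) by simp
  show ?case
  proof (cases p)
    case 0
    show ?thesis
    proof
      assume "t < (x # xs) ! p"
      then have "t < x" using 0 by simp
      then have "filter (\<lambda>y. t < y) xs = xs" using allge by (auto intro!: filter_True)
      then show "length (x # xs) - p \<le> length (filter (\<lambda>y. t < y) (x # xs))" using \<open>t < x\<close> by simp
    next
      assume h: "length (x # xs) - p \<le> length (filter (\<lambda>y. t < y) (x # xs))"
      show "t < (x # xs) ! p"
      proof (rule ccontr)
        assume "\<not> t < (x # xs) ! p"
        then have "\<not> t < x" using 0 by simp
        then have "length (filter (\<lambda>y. t < y) (x # xs)) \<le> length xs" by simp
        then show False using h 0 by simp
      qed
    qed
  next
    case (Suc q)
    have q: "q < length xs" using Cons.prems Suc by simp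
    have IH: "(t < xs ! q) \<longleftrightarrow> length xs - q \<le> length (filter (\<lambda>y. t < y) xs)"
      using Cons.IH[OF _ q] Cons.prems(1) by simp
    show ?thesis
    proof (cases "t < x")
      case True
      then have "filter (\<lambda>y. t < y) xs = xs" using allge by (auto intro!: filter_True)
      moreover have "t < xs ! q" using True allge q by (meson less_le_trans nth_mem)
      ultimately show ?thesis using Suc True by simp
    next
      case False
      then show ?thesis using Suc IH by simp
    qed
  qed
qed

lemma ord_stat_gt_iff:
  assumes "1 \<le> k" "k \<le> n"
  shows "(t < ord_stat X n k w) \<longleftrightarrow> n + 1 - k \<le> card {i\<in>{1..n}. t < X i w}"
proof -
  let ?xs = "map (\<lambda>i. X i w) [1..<Suc n]"
  have len: "length (sort ?xs) = n" by simp
  have "(t < ord_stat X n k w) \<longleftrightarrow> length (sort ?xs) - (k - 1) \<le> length (filter (\<lambda>y. t < y) (sort ?xs))"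
    unfolding ord_stat_def using assms by (intro sorted_nth_gt_iff) auto
  also have "length (filter (\<lambda>y. t < y) (sort ?xs)) = length (filter (\<lambda>y. t < y) ?xs)"
    by (metis length_sort filter_sort)
  also have "\<dots> = length (filter (\<lambda>i. t < X i w) [1..<Suc n])"
    by (simp add: filter_map o_def)
  also have "\<dots> = card ({i. t < X i w} \<inter> set [1..<Suc n])"
    by (simp add: distinct_length_filter)
  also have "{i. t < X i w} \<inter> set [1..<Suc n] = {i\<in>{1..n}. t < X i w}" by auto
  finally show ?thesis using assms len by simp
qed

lemma ord_stat_in:
  assumes "1 \<le> k" "k \<le> n"
  shows "\<exists>i\<in>{1..n}. ord_stat X n k w = X i w"
proof -
  let ?xs = "map (\<lambda>i. X i w) [1..<Suc n]"
  have "sort ?xs ! (k - 1) \<in> set (sort ?xs)" using assms by (intro nth_mem) simp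
  then have "ord_stat X n k w \<in> set ?xs" unfolding ord_stat_def by simp
  then show ?thesis by auto
qed

lemma ord_stat_max_gt_iff:
  assumes "1 \<le> n"
  shows "(t < ord_stat X n n w) \<longleftrightarrow> (\<exists>i\<in>{1..n}. t < X i w)"
proof -
  have "(t < ord_stat X n n w) \<longleftrightarrow> 1 \<le> card {i\<in>{1..n}. t < X i w}"
    using ord_stat_gt_iff[of n n t X w] assms by simp
  also have "\<dots> \<longleftrightarrow> {i\<in>{1..n}. t < X i w} \<noteq> {}"
    by (simp add: Suc_le_eq card_gt_0_iff)
  finally show ?thesis by auto
qed

lemma ord_stat_max_ge:
  assumes "i \<in> {1..n}"
  shows "X i w \<le> ord_stat X n n w"
proof (rule ccontr)
  assume "\<not> ?thesis"
  then have "ord_stat X n n w < ord_stat X n n w"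
    using ord_stat_max_gt_iff[of n "ord_stat X n n w" X w] assms by (metis atLeastAtMost_iff not_le order.trans)
  then show False by simp
qed

lemma card_ge2_obtain:
  assumes "2 \<le> card A"
  shows "\<exists>x\<in>A. \<exists>y\<in>A. x \<noteq> y"
proof -
  have "finite A" using assms card.infinite by force
  obtain x where x: "x \<in> A" using assms by fastforce
  have "card (A - {x}) \<ge> 1" using assms x \<open>finite A\<close> by (simp add: card_Diff_singleton)
  then have "A - {x} \<noteq> {}" by (metis card.empty not_one_le_zero)
  then obtain y where "y \<in> A - {x}" by blast
  then show ?thesis using x by blast
qed

lemma ord_stat_second_gt:
  assumes "2 \<le> n" "t < ord_stat X n (n - 1) w"
  shows "\<exists>i\<in>{1..n}. \<exists>j\<in>{1..n}. i \<noteq> j \<and> t < X i w \<and> t < X j w"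
proof -
  have "2 \<le> card {i\<in>{1..n}. t < X i w}"
    using ord_stat_gt_iff[of "n - 1" n t X w] assms by simp
  from card_ge2_obtain[OF this] obtain i j where "i \<in> {i\<in>{1..n}. t < X i w}" "j \<in> {i\<in>{1..n}. t < X i w}" "i \<noteq> j"
    by blast
  then show ?thesis by blast
qed

lemma ord_stat_le_second:
  assumes "2 \<le> n" "1 \<le> k" "k \<le> n - 1"
  shows "ord_stat X n k w \<le> ord_stat X n (n - 1) w"
proof (rule ccontr)
  let ?t = "ord_stat X n (n - 1) w"
  assume "\<not> ?thesis"
  then have "?t < ord_stat X n k w" by simp
  then have "n + 1 - k \<le> card {i\<in>{1..n}. ?t < X i w}"
    using ord_stat_gt_iff[of k n ?t X w] assms by simp
  then have "n + 1 - (n - 1) \<le> card {i\<in>{1..n}. ?t < X i w}" using assms by simp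
  then have "?t < ?t" using ord_stat_gt_iff[of "n - 1" n ?t X w] assms by simp
  then show False by simp
qed

lemma ord_stat_abs_le:
  assumes n: "2 \<le> n" "1 \<le> k" "k \<le> n - 1" and j: "j \<in> {1..n}" "X j w = ord_stat X n n w"
    and v: "\<And>i. i\<in>{1..n} \<Longrightarrow> i \<noteq> j \<Longrightarrow> \<bar>X i w\<bar> \<le> v"
  shows "\<bar>ord_stat X n k w\<bar> \<le> v"
proof -
  have up: "ord_stat X n k w \<le> v"
  proof (rule ccontr)
    assume "\<not> ?thesis"
    moreover have "ord_stat X n k w \<le> ord_stat X n (n - 1) w" by (rule ord_stat_le_second[OF n])
    ultimately have "v < ord_stat X n (n - 1) w" by linarith
    from ord_stat_second_gt[OF n(1) this]
    obtain i i' where ii: "i\<in>{1..n}" "i'\<in>{1..n}" "i \<noteq> i'" "v < X i w" "v < X i' w"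
      by blast
    show False
    proof (cases "i = j")
      case True
      then have "\<bar>X i' w\<bar> \<le> v" using v[OF ii(2)] ii(3) by simp
      then show False using ii(5) by simp
    next
      case False
      then have "\<bar>X i w\<bar> \<le> v" using v[OF ii(1)] by simp
      then show False using ii(4) by simp
    qed
  qed
  have lo: "- v \<le> ord_stat X n k w"
  proof -
    have kn: "k \<le> n" using n by simp
    have "\<exists>i\<in>{1..n}. ord_stat X n k w = X i w" using ord_stat_in[OF n(2) kn] .
    then obtain i where i: "i \<in> {1..n}" "ord_stat X n k w = X i w" by blast
    show ?thesis
    proof (cases "i = j")
      case False
      then have "\<bar>X i w\<bar> \<le> v" using v[OF i(1)] by simp
      then show ?thesis using i(2) by simp
    next
      case True
      define i' where "i' = (if j = 1 then 2 else (1::nat))"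
      have i': "i' \<in> {1..n}" "i' \<noteq> j" using n(1) j(1) unfolding i'_def by auto
      have "X i' w \<le> X j w" using ord_stat_max_ge[OF i'(1)] j(2) by simp
      moreover have "\<bar>X i' w\<bar> \<le> v" using v[OF i'(1) i'(2)] .
      ultimately show ?thesis using i(2) True by simp
    qed
  qed
  show ?thesis using up lo by simp
qed

lemma ord_stat_nonneg:
  assumes "1 \<le> k" "k \<le> n" "\<forall>i\<in>{1..n}. 0 \<le> X i w"
  shows "0 \<le> ord_stat X n k w"
  using ord_stat_in[of k n X w] assms by auto

lemma ord_stat_measurable:
  assumes X: "\<And>i. i \<in> {1..n} \<Longrightarrow> X i \<in> borel_measurable N" and k: "1 \<le> k" "k \<le> n"
  shows "ord_stat X n k \<in> borel_measurable N"
proof (subst borel_measurable_iff_greater, intro allI)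
  fix t
  have eq: "\<And>w. real (card {i\<in>{1..n}. t < X i w}) = (\<Sum>i\<in>{1..n}. if t < X i w then 1 else 0)"
    by (subst sum.inter_filter[symmetric]) auto
  have m: "(\<lambda>w. (\<Sum>i\<in>{1..n}. if t < X i w then 1 else (0::real))) \<in> borel_measurable N"
  proof (rule borel_measurable_sum)
    fix i assume i: "i \<in> {1..n}"
    have "{w \<in> space N. t < X i w} \<in> sets N" using X[OF i, unfolded borel_measurable_iff_greater] by (rule spec)
    then show "(\<lambda>w. if t < X i w then 1 else (0::real)) \<in> borel_measurable N"
      by (intro measurable_If) auto
  qed
  have "{w \<in> space N. t < ord_stat X n k w} =
        {w \<in> space N. real (n + 1 - k) \<le> (\<Sum>i\<in>{1..n}. if t < X i w then 1 else 0)}"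
  proof (intro Collect_cong conj_cong refl)
    fix w
    show "(t < ord_stat X n k w) = (real (n + 1 - k) \<le> (\<Sum>i\<in>{1..n}. if t < X i w then 1 else 0))"
      unfolding ord_stat_gt_iff[OF k] eq[symmetric] of_nat_le_iff ..
  qed
  also have "\<dots> \<in> sets N" using m[unfolded borel_measurable_iff_ge] by (rule spec)
  finally show "{w \<in> space N. t < ord_stat X n k w} \<in> sets N" .
qed

lemma indep_emeasure_integral:
  assumes P: "prob_space M" and ind: "prob_space.indep_var M MA Y MB Z"
    and A: "A \<in> sets (MA \<Otimes>\<^sub>M MB)"
  shows "emeasure M {w\<in>space M. (Y w, Z w) \<in> A} =
         (\<integral>\<^sup>+c. emeasure M {w\<in>space M. (c, Z w) \<in> A} \<partial>(distr M MA Y))"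
proof -
  interpret prob_space M by (rule P)
  have rvY: "Y \<in> measurable M MA" by (rule indep_var_rv1[OF ind])
  have rvZ: "Z \<in> measurable M MB" by (rule indep_var_rv2[OF ind])
  have eq: "distr M MA Y \<Otimes>\<^sub>M distr M MB Z = distr M (MA \<Otimes>\<^sub>M MB) (\<lambda>w. (Y w, Z w))"
    using indep_var_distribution_eq[THEN iffD1, OF ind] by (elim conjE)
  interpret PZ: prob_space "distr M MB Z" by (rule prob_space_distr) (rule rvZ)
  have rvYZ: "(\<lambda>w. (Y w, Z w)) \<in> measurable M (MA \<Otimes>\<^sub>M MB)" using rvY rvZ by (rule measurable_Pair)
  have "emeasure M {w\<in>space M. (Y w, Z w) \<in> A} = emeasure (distr M (MA \<Otimes>\<^sub>M MB) (\<lambda>w. (Y w, Z w))) A"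
    by (subst emeasure_distr[OF rvYZ A]) (auto intro!: arg_cong[where f="emeasure M"])
  also have "\<dots> = emeasure (distr M MA Y \<Otimes>\<^sub>M distr M MB Z) A" by (simp only: eq)
  also have "\<dots> = (\<integral>\<^sup>+c. emeasure (distr M MB Z) (Pair c -` A) \<partial>(distr M MA Y))"
    by (rule PZ.emeasure_pair_measure_alt) (use A in simp)
  also have "\<dots> = (\<integral>\<^sup>+c. emeasure M {w\<in>space M. (c, Z w) \<in> A} \<partial>(distr M MA Y))"
  proof (rule nn_integral_cong)
    fix c
    have "Pair c -` A \<in> sets MB" using A by (rule sets_Pair1)
    then show "emeasure (distr M MB Z) (Pair c -` A) = emeasure M {w\<in>space M. (c, Z w) \<in> A}"
      by (subst emeasure_distr[OF rvZ]) (auto intro!: arg_cong[where f="emeasure M"])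
  qed
  finally show ?thesis .
qed

lemma indep_compare:
  assumes P: "prob_space M" and ind: "prob_space.indep_var M MA Y MB Z"
    and A: "A \<in> sets (MA \<Otimes>\<^sub>M MB)" and B: "B \<in> sets (MA \<Otimes>\<^sub>M MB)"
    and k: "0 \<le> k"
    and ae: "AE c in distr M MA Y. measure M {w\<in>space M. (c, Z w) \<in> A} \<le> k * measure M {w\<in>space M. (c, Z w) \<in> B}"
  shows "measure M {w\<in>space M. (Y w, Z w) \<in> A} \<le> k * measure M {w\<in>space M. (Y w, Z w) \<in> B}"
proof -
  interpret prob_space M by (rule P)
  have rvZ: "Z \<in> measurable M MB" by (rule indep_var_rv2[OF ind])
  have rvY: "Y \<in> measurable M MA" by (rule indep_var_rv1[OF ind])
  interpret PZ: prob_space "distr M MB Z" by (rule prob_space_distr) (rule rvZ)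
  have em: "emeasure M {w\<in>space M. (c, Z w) \<in> S} = ennreal (measure M {w\<in>space M. (c, Z w) \<in> S})"
    if "S \<in> sets (MA \<Otimes>\<^sub>M MB)" for S c
    by (rule emeasure_eq_measure)
  have mB: "(\<lambda>c. emeasure M {w\<in>space M. (c, Z w) \<in> B}) \<in> borel_measurable (distr M MA Y)"
  proof -
    have "(\<lambda>c. emeasure (distr M MB Z) (Pair c -` B)) \<in> borel_measurable (distr M MA Y)"
      by (rule PZ.measurable_emeasure_Pair) (use B in simp)
    moreover have "emeasure (distr M MB Z) (Pair c -` B) = emeasure M {w\<in>space M. (c, Z w) \<in> B}" for c
    proof -
      have "Pair c -` B \<in> sets MB" using B by (rule sets_Pair1)
      then show ?thesis by (subst emeasure_distr[OF rvZ]) (auto intro!: arg_cong[where f="emeasure M"])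
    qed
    ultimately show ?thesis by simp
  qed
  have "ennreal (measure M {w\<in>space M. (Y w, Z w) \<in> A}) = emeasure M {w\<in>space M. (Y w, Z w) \<in> A}"
    by (simp add: emeasure_eq_measure)
  also have "\<dots> = (\<integral>\<^sup>+c. emeasure M {w\<in>space M. (c, Z w) \<in> A} \<partial>(distr M MA Y))"
    by (rule indep_emeasure_integral[OF P ind A])
  also have "\<dots> \<le> (\<integral>\<^sup>+c. ennreal k * emeasure M {w\<in>space M. (c, Z w) \<in> B} \<partial>(distr M MA Y))"
  proof (rule nn_integral_mono_AE)
    show "AE c in distr M MA Y. emeasure M {w\<in>space M. (c, Z w) \<in> A} \<le> ennreal k * emeasure M {w\<in>space M. (c, Z w) \<in> B}"
      using ae
    proof (rule eventually_mono)
      fix c assume "measure M {w\<in>space M. (c, Z w) \<in> A} \<le> k * measure M {w\<in>space M. (c, Z w) \<in> B}"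
      then show "emeasure M {w\<in>space M. (c, Z w) \<in> A} \<le> ennreal k * emeasure M {w\<in>space M. (c, Z w) \<in> B}"
        using k by (simp add: emeasure_eq_measure ennreal_mult[symmetric] ennreal_leI)
    qed
  qed
  also have "\<dots> = ennreal k * (\<integral>\<^sup>+c. emeasure M {w\<in>space M. (c, Z w) \<in> B} \<partial>(distr M MA Y))"
    by (rule nn_integral_cmult[OF mB])
  also have "\<dots> = ennreal k * emeasure M {w\<in>space M. (Y w, Z w) \<in> B}"
    by (simp only: indep_emeasure_integral[OF P ind B])
  also have "\<dots> = ennreal (k * measure M {w\<in>space M. (Y w, Z w) \<in> B})"
    using k by (simp add: emeasure_eq_measure ennreal_mult)
  finally show ?thesis using k by (simp add: ennreal_le_iff2) (meson measure_nonneg mult_nonneg_nonneg order.trans)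
qed

lemma Sc_split:
  assumes "1 \<le> n"
  shows "(\<Sum>i=0..n-1. c i * ord_stat X n (n-i) w) =
         c 0 * ord_stat X n n w + (\<Sum>i=1..n-1. c i * ord_stat X n (n-i) w)"
  by (subst sum.atLeast_Suc_atMost) simp_all

lemma R_upper:
  assumes n: "2 \<le> n" and d: "0 \<le> d" and cb: "\<forall>i\<in>{1..n-1}. \<bar>c i\<bar> \<le> d"
    and v: "(\<forall>i\<in>{1..n-1}. 0 \<le> c i) \<or> (\<forall>i\<in>{1..n}. 0 \<le> X i w)"
  shows "(\<Sum>i=1..n-1. c i * ord_stat X n (n-i) w) \<le> real (n-1) * d * max (ord_stat X n (n-1) w) 0"
proof -
  have tm: "c i * ord_stat X n (n-i) w \<le> d * max (ord_stat X n (n-1) w) 0" if i: "i \<in> {1..n-1}" for i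
  proof -
    have k: "1 \<le> n - i" "n - i \<le> n - 1" using i n by auto
    have le2: "ord_stat X n (n-i) w \<le> ord_stat X n (n-1) w" by (rule ord_stat_le_second[OF n k])
    have ci: "\<bar>c i\<bar> \<le> d" using cb i by blast
    show ?thesis
    proof (cases "\<forall>i\<in>{1..n-1}. 0 \<le> c i")
      case True
      then have c0: "0 \<le> c i" using i by blast
      have "c i * ord_stat X n (n-i) w \<le> c i * max (ord_stat X n (n-1) w) 0"
        using le2 c0 by (intro mult_left_mono) auto
      also have "\<dots> \<le> d * max (ord_stat X n (n-1) w) 0"
        using ci c0 by (intro mult_right_mono) auto
      finally show ?thesis .
    next
      case False
      then have nn: "\<forall>i\<in>{1..n}. 0 \<le> X i w" using v by blast
      have o0: "0 \<le> ord_stat X n (n-i) w" using k n nn by (intro ord_stat_nonneg) auto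
      have "c i * ord_stat X n (n-i) w \<le> \<bar>c i\<bar> * ord_stat X n (n-i) w"
        using o0 by (intro mult_right_mono) auto
      also have "\<dots> \<le> d * ord_stat X n (n-i) w" using ci o0 by (intro mult_right_mono) auto
      also have "\<dots> \<le> d * max (ord_stat X n (n-1) w) 0" using le2 d by (intro mult_left_mono) auto
      finally show ?thesis .
    qed
  qed
  have "(\<Sum>i=1..n-1. c i * ord_stat X n (n-i) w) \<le> (\<Sum>i=1..n-1. d * max (ord_stat X n (n-1) w) 0)"
    by (rule sum_mono) (rule tm)
  also have "\<dots> = real (n-1) * d * max (ord_stat X n (n-1) w) 0" by simp
  finally show ?thesis .
qed

lemma R_lower:
  assumes n: "2 \<le> n" and d: "0 \<le> d" and cb: "\<forall>i\<in>{1..n-1}. \<bar>c i\<bar> \<le> d"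
    and j: "j \<in> {1..n}" "X j w = ord_stat X n n w"
    and v: "\<And>i. i\<in>{1..n} \<Longrightarrow> i \<noteq> j \<Longrightarrow> \<bar>X i w\<bar> \<le> v"
  shows "- (real (n-1) * d * v) \<le> (\<Sum>i=1..n-1. c i * ord_stat X n (n-i) w)"
proof -
  have tm: "- (d * v) \<le> c i * ord_stat X n (n-i) w" if i: "i \<in> {1..n-1}" for i
  proof -
    have k: "1 \<le> n - i" "n - i \<le> n - 1" using i n by auto
    have o: "\<bar>ord_stat X n (n-i) w\<bar> \<le> v" by (rule ord_stat_abs_le[OF n k j v])
    have ci: "\<bar>c i\<bar> \<le> d" using cb i by blast
    have "\<bar>c i * ord_stat X n (n-i) w\<bar> \<le> d * v"
      unfolding abs_mult using ci o d by (intro mult_mono) auto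
    then show ?thesis by linarith
  qed
  have "(\<Sum>i=1..n-1. - (d * v)) \<le> (\<Sum>i=1..n-1. c i * ord_stat X n (n-i) w)"
    by (rule sum_mono) (rule tm)
  moreover have "(\<Sum>i=1..n-1. - (d * v)) = - (real (n-1) * d * v)" by simp
  ultimately show ?thesis by simp
qed

lemma tendsto_zero_eventually_le:
  fixes f g :: "real \<Rightarrow> real"
  assumes "((\<lambda>y. f y / g y) \<longlongrightarrow> 0) at_top" "0 < e" "eventually (\<lambda>y. 0 < g y) at_top"
  shows "eventually (\<lambda>y. f y \<le> e * g y) at_top"
proof -
  have "eventually (\<lambda>y. dist (f y / g y) 0 < e) at_top" using assms(1,2) by (rule tendstoD)
  with assms(3) show ?thesis
  proof eventually_elim
    case (elim y)
    then have "\<bar>f y\<bar> / g y < e" using elim(1) by simp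
    then have "\<bar>f y\<bar> < e * g y" using elim(1) by (simp add: pos_divide_less_eq)
    then show ?case using abs_ge_self[of "f y"] by linarith
  qed
qed

lemma (in prob_space) union_pairs_le:
  assumes fin: "finite I" and E: "\<And>i j. i \<in> I \<Longrightarrow> j \<in> I \<Longrightarrow> i \<noteq> j \<Longrightarrow> E i j \<in> events"
    and le: "\<And>i j. i \<in> I \<Longrightarrow> j \<in> I \<Longrightarrow> i \<noteq> j \<Longrightarrow> prob (E i j) \<le> r" and r: "0 \<le> r"
  shows "prob (\<Union>i\<in>I. \<Union>j\<in>I-{i}. E i j) \<le> real (card I * card I) * r"
proof -
  have U: "(\<Union>j\<in>I-{i}. E i j) \<in> events" if "i \<in> I" for i
    using that E fin by (intro sets.finite_UN) auto
  have "prob (\<Union>i\<in>I. \<Union>j\<in>I-{i}. E i j) \<le> (\<Sum>i\<in>I. prob (\<Union>j\<in>I-{i}. E i j))"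
    using fin U by (intro finite_measure_subadditive_finite) auto
  also have "\<dots> \<le> (\<Sum>i\<in>I. real (card I) * r)"
  proof (rule sum_mono)
    fix i assume i: "i \<in> I"
    have "prob (\<Union>j\<in>I-{i}. E i j) \<le> (\<Sum>j\<in>I-{i}. prob (E i j))"
      using fin E i by (intro finite_measure_subadditive_finite) auto
    also have "\<dots> \<le> (\<Sum>j\<in>I-{i}. r)" using le i by (intro sum_mono) auto
    also have "\<dots> = real (card (I - {i})) * r" by simp
    also have "\<dots> \<le> real (card I) * r" using r fin by (intro mult_right_mono) (auto intro: card_mono)
    finally show "prob (\<Union>j\<in>I-{i}. E i j) \<le> real (card I) * r" .
  qed
  also have "\<dots> = real (card I * card I) * r" by simp
  finally show ?thesis .
qed

locale core =
  fixes M :: "'a measure" and n :: nat and X :: "nat \<Rightarrow> 'a \<Rightarrow> real" and a b d :: real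
    and h :: "real \<Rightarrow> real"
  assumes P: "prob_space M"
    and n2: "n \<ge> 2"
    and Xmeas: "\<And>i. i \<in> {1..n} \<Longrightarrow> X i \<in> borel_measurable M"
    and ab: "0 < a" "a \<le> b" and d: "0 \<le> d"
    and Fpos: "\<And>y. 0 \<le> y \<Longrightarrow> 0 < tail M (ord_stat X n n) y"
    and hpos: "eventually (\<lambda>y. 0 < h y) at_top"
    and hsmall: "eventually (\<lambda>y. h y < y) at_top"
    and F1: "\<And>\<epsilon>. \<epsilon> > 0 \<Longrightarrow> \<exists>\<eta>>0. eventually (\<lambda>y.
         tail M (ord_stat X n n) (y - \<eta> * h y) \<le> (1 + \<epsilon>) * tail M (ord_stat X n n) y \<and>
         (1 - \<epsilon>) * tail M (ord_stat X n n) y \<le> tail M (ord_stat X n n) (y + \<eta> * h y)) at_top"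
    and star: "\<And>i j t. i \<in> {1..n} \<Longrightarrow> j \<in> {1..n} \<Longrightarrow> i \<noteq> j \<Longrightarrow> t > 0 \<Longrightarrow>
         ((\<lambda>x. measure M {w \<in> space M. \<bar>X i w\<bar> > t * h x \<and> X j w > x}
                      / tail M (ord_stat X n n) x) \<longlongrightarrow> 0) at_top"
    and F3: "\<And>K \<delta>. 0 \<le> K \<Longrightarrow> 0 < \<delta> \<Longrightarrow> ((\<lambda>y. measure M {w\<in>space M.
         \<delta> * h y < ord_stat X n (n-1) w \<and> y < ord_stat X n n w + K * ord_stat X n (n-1) w}
         / tail M (ord_stat X n n) y) \<longlongrightarrow> 0) at_top"
begin

sublocale prob_space M by (rule P)

definition okc :: "(nat \<Rightarrow> real) \<Rightarrow> bool" where
  "okc c \<longleftrightarrow> a \<le> c 0 \<and> c 0 \<le> b \<and> (\<forall>i\<in>{1..n-1}. \<bar>c i\<bar> \<le> d) \<and>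
     ((\<forall>i\<in>{1..n-1}. 0 \<le> c i) \<or> (AE w in M. \<forall>i\<in>{1..n}. 0 \<le> X i w))"

lemma os_meas: "1 \<le> k \<Longrightarrow> k \<le> n \<Longrightarrow> ord_stat X n k \<in> borel_measurable M"
  by (rule ord_stat_measurable[OF Xmeas])

lemma os_sets: "1 \<le> k \<Longrightarrow> k \<le> n \<Longrightarrow> {w\<in>space M. t < ord_stat X n k w} \<in> events"
  using os_meas[unfolded borel_measurable_iff_greater] by blast

lemma tail_eq: "tail M (ord_stat X n n) t = prob {w\<in>space M. t < ord_stat X n n w}"
  by (simp add: tail_def)

lemma cM_eq:
  assumes "0 < c0"
  shows "prob {w\<in>space M. x < c0 * ord_stat X n n w} = tail M (ord_stat X n n) (x / c0)"
  unfolding tail_def using assms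
  by (intro arg_cong[where f=prob] Collect_cong conj_cong refl) (simp add: pos_divide_less_eq mult.commute)

lemma y_ge:
  assumes "b * max y0 0 \<le> x" "a \<le> c0" "c0 \<le> b"
  shows "y0 \<le> x / c0" "0 \<le> x / c0"
proof -
  have b0: "0 < b" using ab by linarith
  have c0: "0 < c0" using ab assms by linarith
  have x0: "0 \<le> x" using assms(1) b0 by (meson max.cobounded2 mult_nonneg_nonneg order.trans less_imp_le)
  have "max y0 0 * b \<le> x" using assms(1) by (simp add: mult.commute)
  then have "max y0 0 \<le> x / b" by (simp only: pos_le_divide_eq[OF b0])
  also have "x / b \<le> x / c0" using x0 c0 assms(3) by (intro divide_left_mono) auto
  finally show "y0 \<le> x / c0" "0 \<le> x / c0" by auto
qed

lemma evFpos: "eventually (\<lambda>y. 0 < tail M (ord_stat X n n) y) at_top"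
  using eventually_ge_at_top[of "0::real"] by eventually_elim (rule Fpos)

lemma upper_uniform:
  assumes eps: "0 < \<epsilon>"
  shows "\<exists>x0. \<forall>x\<ge>x0. \<forall>c. okc c \<longrightarrow>
    prob {w\<in>space M. x < (\<Sum>i=0..n-1. c i * ord_stat X n (n-i) w)}
      \<le> (1 + 2*\<epsilon>) * prob {w\<in>space M. x < c 0 * ord_stat X n n w}"
proof -
  let ?F = "tail M (ord_stat X n n)"
  obtain \<eta> where \<eta>: "\<eta> > 0" and ev1: "eventually (\<lambda>y.
         ?F (y - \<eta> * h y) \<le> (1 + \<epsilon>) * ?F y \<and> (1 - \<epsilon>) * ?F y \<le> ?F (y + \<eta> * h y)) at_top"
    using F1[OF eps] by blast
  define K where "K = real (n-1) * d"
  have K0: "0 \<le> K" unfolding K_def using d by simp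
  define \<delta> where "\<delta> = a * \<eta> / (K + 1)"
  have \<delta>0: "0 < \<delta>" unfolding \<delta>_def using ab \<eta> K0 by simp
  define K' where "K' = K / a"
  have K'0: "0 \<le> K'" unfolding K'_def using K0 ab by simp
  have Kd: "K * \<delta> \<le> a * \<eta>"
  proof -
    have "K * \<delta> = (K / (K + 1)) * (a * \<eta>)" unfolding \<delta>_def by simp
    also have "\<dots> \<le> 1 * (a * \<eta>)" using K0 ab \<eta> by (intro mult_right_mono) auto
    finally show ?thesis by simp
  qed
  have ev2: "eventually (\<lambda>y. prob {w\<in>space M. \<delta> * h y < ord_stat X n (n-1) w \<and>
      y < ord_stat X n n w + K' * ord_stat X n (n-1) w} \<le> \<epsilon> * ?F y) at_top"
    by (rule tendsto_zero_eventually_le[OF F3[OF K'0 \<delta>0] eps evFpos])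
  have "eventually (\<lambda>y. (?F (y - \<eta> * h y) \<le> (1 + \<epsilon>) * ?F y \<and> (1 - \<epsilon>) * ?F y \<le> ?F (y + \<eta> * h y))
     \<and> prob {w\<in>space M. \<delta> * h y < ord_stat X n (n-1) w \<and>
      y < ord_stat X n n w + K' * ord_stat X n (n-1) w} \<le> \<epsilon> * ?F y \<and> 0 < h y) at_top"
    by (rule eventually_conj[OF ev1 eventually_conj[OF ev2 hpos]])
  then obtain y0 where y0: "\<And>y. y \<ge> y0 \<Longrightarrow> (?F (y - \<eta> * h y) \<le> (1 + \<epsilon>) * ?F y \<and> (1 - \<epsilon>) * ?F y \<le> ?F (y + \<eta> * h y))
     \<and> prob {w\<in>space M. \<delta> * h y < ord_stat X n (n-1) w \<and>
      y < ord_stat X n n w + K' * ord_stat X n (n-1) w} \<le> \<epsilon> * ?F y \<and> 0 < h y"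
    unfolding eventually_at_top_linorder by blast
  show ?thesis
  proof (intro exI allI impI)
    fix x c assume x: "b * max y0 0 \<le> x" and c: "okc c"
    have ca: "a \<le> c 0" and cb: "c 0 \<le> b" and cd: "\<forall>i\<in>{1..n-1}. \<bar>c i\<bar> \<le> d"
      and cv: "(\<forall>i\<in>{1..n-1}. 0 \<le> c i) \<or> (AE w in M. \<forall>i\<in>{1..n}. 0 \<le> X i w)"
      using c unfolding okc_def by auto
    have c0: "0 < c 0" using ab ca by linarith
    define y where "y = x / c 0"
    have yy: "y0 \<le> y" "0 \<le> y" unfolding y_def using y_ge[OF x ca cb] by auto
    have xe: "x = c 0 * y" unfolding y_def using c0 by simp
    have Fy1: "?F (y - \<eta> * h y) \<le> (1 + \<epsilon>) * ?F y" and Fy2: "prob {w\<in>space M. \<delta> * h y < ord_stat X n (n-1) w \<and>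
      y < ord_stat X n n w + K' * ord_stat X n (n-1) w} \<le> \<epsilon> * ?F y" and hy: "0 < h y"
      using y0[OF yy(1)] by auto
    define U1 where "U1 = {w\<in>space M. y - \<eta> * h y < ord_stat X n n w}"
    define U2 where "U2 = {w\<in>space M. \<delta> * h y < ord_stat X n (n-1) w \<and>
      y < ord_stat X n n w + K' * ord_stat X n (n-1) w}"
    have U1s: "U1 \<in> events" unfolding U1_def using n2 by (intro os_sets) auto
    have U2s: "U2 \<in> events"
    proof -
      have [measurable]: "ord_stat X n (n-1) \<in> borel_measurable M" "ord_stat X n n \<in> borel_measurable M"
        using n2 by (auto intro!: os_meas)
      show ?thesis unfolding U2_def by measurable
    qed
    have AEv: "AE w in M. (\<forall>i\<in>{1..n-1}. 0 \<le> c i) \<or> (\<forall>i\<in>{1..n}. 0 \<le> X i w)"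
      using cv by auto
    have incl: "AE w in M. w \<in> {w\<in>space M. x < (\<Sum>i=0..n-1. c i * ord_stat X n (n-i) w)} \<longrightarrow> w \<in> U1 \<union> U2"
      using AEv
    proof (rule eventually_mono)
      fix w assume V: "(\<forall>i\<in>{1..n-1}. 0 \<le> c i) \<or> (\<forall>i\<in>{1..n}. 0 \<le> X i w)"
      show "w \<in> {w\<in>space M. x < (\<Sum>i=0..n-1. c i * ord_stat X n (n-i) w)} \<longrightarrow> w \<in> U1 \<union> U2"
      proof
        assume "w \<in> {w\<in>space M. x < (\<Sum>i=0..n-1. c i * ord_stat X n (n-i) w)}"
        then have w: "w \<in> space M" and xS: "x < (\<Sum>i=0..n-1. c i * ord_stat X n (n-i) w)" by auto
        have R: "(\<Sum>i=1..n-1. c i * ord_stat X n (n-i) w) \<le> K * max (ord_stat X n (n-1) w) 0"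
          unfolding K_def by (rule R_upper[of n d c X w, OF n2 d cd V])
        have main: "c 0 * y < c 0 * ord_stat X n n w + K * max (ord_stat X n (n-1) w) 0"
          using xS R Sc_split[of n c X w] n2 xe by simp
        show "w \<in> U1 \<union> U2"
        proof (cases "ord_stat X n (n-1) w \<le> \<delta> * h y")
          case True
          have m1: "max (ord_stat X n (n-1) w) 0 \<le> \<delta> * h y" using True \<delta>0 hy by simp
          have "K * max (ord_stat X n (n-1) w) 0 \<le> K * (\<delta> * h y)" using m1 K0 by (rule mult_left_mono)
          also have "\<dots> = (K * \<delta>) * h y" by simp
          also have "\<dots> \<le> (a * \<eta>) * h y" using Kd hy by (intro mult_right_mono) auto
          also have "\<dots> \<le> (c 0 * \<eta>) * h y" using ca \<eta> hy by (intro mult_right_mono) auto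
          finally have "c 0 * y < c 0 * (ord_stat X n n w + \<eta> * h y)" using main by (simp add: algebra_simps)
          then have "y < ord_stat X n n w + \<eta> * h y" using c0 by simp
          then show ?thesis unfolding U1_def using w by auto
        next
          case False
          then have s0: "0 < ord_stat X n (n-1) w" using \<delta>0 hy by (smt (verit) mult_pos_pos)
          have "c 0 * y < c 0 * ord_stat X n n w + K * ord_stat X n (n-1) w" using main s0 by simp
          then have "y < ord_stat X n n w + (K / c 0) * ord_stat X n (n-1) w"
            using c0 by (simp add: field_simps)
          also have "(K / c 0) * ord_stat X n (n-1) w \<le> K' * ord_stat X n (n-1) w"
            unfolding K'_def using s0 K0 ab ca by (intro mult_right_mono divide_left_mono) auto
          finally have "y < ord_stat X n n w + K' * ord_stat X n (n-1) w" by simp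
          then show ?thesis unfolding U2_def using w False by auto
        qed
      qed
    qed
    have "prob {w\<in>space M. x < (\<Sum>i=0..n-1. c i * ord_stat X n (n-i) w)} \<le> prob (U1 \<union> U2)"
      using incl U1s U2s by (intro finite_measure_mono_AE) auto
    also have "\<dots> \<le> prob U1 + prob U2" using U1s U2s by (rule measure_Un_le)
    also have "prob U1 = ?F (y - \<eta> * h y)" unfolding U1_def tail_def ..
    also have "prob U2 \<le> \<epsilon> * ?F y" unfolding U2_def by (rule Fy2)
    finally have "prob {w\<in>space M. x < (\<Sum>i=0..n-1. c i * ord_stat X n (n-i) w)} \<le> (1 + 2*\<epsilon>) * ?F y"
      using Fy1 by (simp add: algebra_simps)
    also have "?F y = prob {w\<in>space M. x < c 0 * ord_stat X n n w}"
      unfolding y_def by (rule cM_eq[OF c0, symmetric])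
    finally show "prob {w\<in>space M. x < (\<Sum>i=0..n-1. c i * ord_stat X n (n-i) w)}
      \<le> (1 + 2*\<epsilon>) * prob {w\<in>space M. x < c 0 * ord_stat X n n w}" .
  qed
qed

lemma Sc_meas: "(\<lambda>w. \<Sum>i=0..n-1. c i * ord_stat X n (n-i) w) \<in> borel_measurable M"
proof (rule borel_measurable_sum)
  fix i assume i: "i \<in> {0..n-1}"
  have "ord_stat X n (n-i) \<in> borel_measurable M" using i n2 by (intro os_meas) auto
  then show "(\<lambda>w. c i * ord_stat X n (n-i) w) \<in> borel_measurable M" by measurable
qed

lemma lower_uniform:
  assumes eps: "0 < \<epsilon>"
  shows "\<exists>x0. \<forall>x\<ge>x0. \<forall>c. okc c \<longrightarrow>
    (1 - 2*\<epsilon>) * prob {w\<in>space M. x < c 0 * ord_stat X n n w}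
      \<le> prob {w\<in>space M. x < (\<Sum>i=0..n-1. c i * ord_stat X n (n-i) w)}"
proof -
  let ?F = "tail M (ord_stat X n n)"
  obtain \<eta> where \<eta>: "\<eta> > 0" and ev1: "eventually (\<lambda>y.
         ?F (y - \<eta> * h y) \<le> (1 + \<epsilon>) * ?F y \<and> (1 - \<epsilon>) * ?F y \<le> ?F (y + \<eta> * h y)) at_top"
    using F1[OF eps] by blast
  define K where "K = real (n-1) * d"
  have K0: "0 \<le> K" unfolding K_def using d by simp
  define t where "t = a * \<eta> / (K + 1)"
  have t0: "0 < t" unfolding t_def using ab \<eta> K0 by simp
  have Kt: "K * t \<le> a * \<eta>"
  proof -
    have "K * t = (K / (K + 1)) * (a * \<eta>)" unfolding t_def by simp
    also have "\<dots> \<le> 1 * (a * \<eta>)" using K0 ab \<eta> by (intro mult_right_mono) auto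
    finally show ?thesis by simp
  qed
  define r where "r = \<epsilon> / real (n * n)"
  have r0: "0 < r" unfolding r_def using eps n2 by simp
  have evp: "eventually (\<lambda>y. \<forall>i\<in>{1..n}. \<forall>j\<in>{1..n}. i \<noteq> j \<longrightarrow>
      prob {w \<in> space M. \<bar>X i w\<bar> > t * h y \<and> X j w > y} \<le> r * ?F y) at_top"
  proof (rule eventually_ball_finite, simp, intro ballI)
    fix i assume i: "i \<in> {1..n}"
    show "eventually (\<lambda>y. \<forall>j\<in>{1..n}. i \<noteq> j \<longrightarrow>
      prob {w \<in> space M. \<bar>X i w\<bar> > t * h y \<and> X j w > y} \<le> r * ?F y) at_top"
    proof (rule eventually_ball_finite, simp, intro ballI)
      fix j assume j: "j \<in> {1..n}"
      show "eventually (\<lambda>y. i \<noteq> j \<longrightarrow>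
        prob {w \<in> space M. \<bar>X i w\<bar> > t * h y \<and> X j w > y} \<le> r * ?F y) at_top"
      proof (cases "i = j")
        case True then show ?thesis by simp
      next
        case False
        have "eventually (\<lambda>y. prob {w \<in> space M. \<bar>X i w\<bar> > t * h y \<and> X j w > y} \<le> r * ?F y) at_top"
          by (rule tendsto_zero_eventually_le[OF star[OF i j False t0] r0 evFpos])
        then show ?thesis by (rule eventually_mono) simp
      qed
    qed
  qed
  have "eventually (\<lambda>y. (?F (y - \<eta> * h y) \<le> (1 + \<epsilon>) * ?F y \<and> (1 - \<epsilon>) * ?F y \<le> ?F (y + \<eta> * h y))
     \<and> (\<forall>i\<in>{1..n}. \<forall>j\<in>{1..n}. i \<noteq> j \<longrightarrow>
      prob {w \<in> space M. \<bar>X i w\<bar> > t * h y \<and> X j w > y} \<le> r * ?F y) \<and> 0 < h y) at_top"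
    by (rule eventually_conj[OF ev1 eventually_conj[OF evp hpos]])
  then obtain y0 where y0: "\<And>y. y \<ge> y0 \<Longrightarrow> (?F (y - \<eta> * h y) \<le> (1 + \<epsilon>) * ?F y \<and> (1 - \<epsilon>) * ?F y \<le> ?F (y + \<eta> * h y))
     \<and> (\<forall>i\<in>{1..n}. \<forall>j\<in>{1..n}. i \<noteq> j \<longrightarrow>
      prob {w \<in> space M. \<bar>X i w\<bar> > t * h y \<and> X j w > y} \<le> r * ?F y) \<and> 0 < h y"
    unfolding eventually_at_top_linorder by blast
  show ?thesis
  proof (intro exI allI impI)
    fix x c assume x: "b * max y0 0 \<le> x" and c: "okc c"
    have ca: "a \<le> c 0" and cb: "c 0 \<le> b" and cd: "\<forall>i\<in>{1..n-1}. \<bar>c i\<bar> \<le> d"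
      using c unfolding okc_def by auto
    have c0: "0 < c 0" using ab ca by linarith
    define y where "y = x / c 0"
    have yy: "y0 \<le> y" "0 \<le> y" unfolding y_def using y_ge[OF x ca cb] by auto
    have xe: "x = c 0 * y" unfolding y_def using c0 by simp
    have Fy1: "(1 - \<epsilon>) * ?F y \<le> ?F (y + \<eta> * h y)" and hy: "0 < h y"
      and Fp: "\<And>i j. i\<in>{1..n} \<Longrightarrow> j\<in>{1..n} \<Longrightarrow> i \<noteq> j \<Longrightarrow>
      prob {w \<in> space M. \<bar>X i w\<bar> > t * h y \<and> X j w > y} \<le> r * ?F y"
      using y0[OF yy(1)] by auto
    define G1 where "G1 = {w\<in>space M. y + \<eta> * h y < ord_stat X n n w}"
    define E where "E = (\<lambda>i j. {w \<in> space M. \<bar>X i w\<bar> > t * h y \<and> X j w > y})"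
    define Bad where "Bad = (\<Union>i\<in>{1..n}. \<Union>j\<in>{1..n}-{i}. E i j)"
    have G1s: "G1 \<in> events" unfolding G1_def using n2 by (intro os_sets) auto
    have Es: "E i j \<in> events" if "i \<in> {1..n}" "j \<in> {1..n}" for i j
    proof -
      have [measurable]: "X i \<in> borel_measurable M" "X j \<in> borel_measurable M" using that by (auto intro!: Xmeas)
      show ?thesis unfolding E_def by measurable
    qed
    have Bads: "Bad \<in> events" unfolding Bad_def using Es by (intro sets.finite_UN) auto
    have PBad: "prob Bad \<le> real (card {1..n}) * real (card {1..n}) * (r * ?F y)"
    proof -
      have "prob Bad \<le> real (card {1..n} * card {1..n}) * (r * ?F y)"
        unfolding Bad_def using Es Fp r0 Fpos[OF yy(2)]
        by (intro union_pairs_le) (auto simp: E_def)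
      then show ?thesis by simp
    qed
    have PBad': "prob Bad \<le> \<epsilon> * ?F y"
    proof -
      have e: "real n * real n * r = \<epsilon>" unfolding r_def using n2 by simp
      have "prob Bad \<le> (real n * real n * r) * ?F y" using PBad by (simp add: mult.assoc)
      then show ?thesis unfolding e .
    qed
    have incl: "G1 - Bad \<subseteq> {w\<in>space M. x < (\<Sum>i=0..n-1. c i * ord_stat X n (n-i) w)}"
    proof
      fix w assume w: "w \<in> G1 - Bad"
      then have ws: "w \<in> space M" and Mg: "y + \<eta> * h y < ord_stat X n n w" unfolding G1_def by auto
      have "\<exists>j\<in>{1..n}. ord_stat X n n w = X j w" using n2 by (intro ord_stat_in) auto
      then obtain j where j: "j \<in> {1..n}" "X j w = ord_stat X n n w" by (metis)
      have Xj: "y < X j w" using Mg j(2) hy \<eta> by (smt (verit) mult_pos_pos)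
      have v: "\<bar>X i w\<bar> \<le> t * h y" if i: "i \<in> {1..n}" "i \<noteq> j" for i
      proof (rule ccontr)
        assume "\<not> ?thesis"
        then have "w \<in> E i j" unfolding E_def using ws Xj by auto
        then have "w \<in> Bad" unfolding Bad_def using i j(1) by blast
        then show False using w by blast
      qed
      have R: "- (K * (t * h y)) \<le> (\<Sum>i=1..n-1. c i * ord_stat X n (n-i) w)"
        unfolding K_def using R_lower[of n d c j X w "t * h y", OF n2 d cd j v] by simp
      have "K * (t * h y) = (K * t) * h y" by simp
      also have "\<dots> \<le> (a * \<eta>) * h y" using Kt hy by (intro mult_right_mono) auto
      also have "\<dots> \<le> (c 0 * \<eta>) * h y" using ca \<eta> hy by (intro mult_right_mono) auto
      finally have KT: "K * (t * h y) \<le> c 0 * (\<eta> * h y)" by simp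
      have "c 0 * (y + \<eta> * h y) < c 0 * ord_stat X n n w" using Mg c0 by simp
      then have "x < c 0 * ord_stat X n n w + (\<Sum>i=1..n-1. c i * ord_stat X n (n-i) w)"
        using R KT xe by (simp add: algebra_simps)
      then show "w \<in> {w\<in>space M. x < (\<Sum>i=0..n-1. c i * ord_stat X n (n-i) w)}"
        using ws Sc_split[of n c X w] n2 by simp
    qed
    have Ss: "{w\<in>space M. x < (\<Sum>i=0..n-1. c i * ord_stat X n (n-i) w)} \<in> events"
      using Sc_meas[of c] unfolding borel_measurable_iff_greater by blast
    have "(1 - 2*\<epsilon>) * ?F y \<le> ?F (y + \<eta> * h y) - \<epsilon> * ?F y" using Fy1 by (simp add: algebra_simps)
    also have "?F (y + \<eta> * h y) = prob G1" unfolding G1_def tail_def ..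
    also have "prob G1 - \<epsilon> * ?F y \<le> prob G1 - prob Bad" using PBad' by simp
    also have "\<dots> \<le> prob (G1 - Bad)"
      using G1s Bads by (simp add: finite_measure_Diff' finite_measure_mono)
    also have "\<dots> \<le> prob {w\<in>space M. x < (\<Sum>i=0..n-1. c i * ord_stat X n (n-i) w)}"
      using incl Ss by (rule finite_measure_mono)
    finally show "(1 - 2*\<epsilon>) * prob {w\<in>space M. x < c 0 * ord_stat X n n w}
      \<le> prob {w\<in>space M. x < (\<Sum>i=0..n-1. c i * ord_stat X n (n-i) w)}"
      unfolding y_def cM_eq[OF c0] .
  qed
qed

lemma evpairs:
  assumes t0: "0 < t" and r0: "0 < r"
  shows "eventually (\<lambda>y. \<forall>i\<in>{1..n}. \<forall>j\<in>{1..n}. i \<noteq> j \<longrightarrow>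
      prob {w \<in> space M. \<bar>X i w\<bar> > t * h y \<and> X j w > y} \<le> r * tail M (ord_stat X n n) y) at_top"
proof (rule eventually_ball_finite, simp, intro ballI)
  fix i assume i: "i \<in> {1..n}"
  show "eventually (\<lambda>y. \<forall>j\<in>{1..n}. i \<noteq> j \<longrightarrow>
    prob {w \<in> space M. \<bar>X i w\<bar> > t * h y \<and> X j w > y} \<le> r * tail M (ord_stat X n n) y) at_top"
  proof (rule eventually_ball_finite, simp, intro ballI)
    fix j assume j: "j \<in> {1..n}"
    show "eventually (\<lambda>y. i \<noteq> j \<longrightarrow>
      prob {w \<in> space M. \<bar>X i w\<bar> > t * h y \<and> X j w > y} \<le> r * tail M (ord_stat X n n) y) at_top"
    proof (cases "i = j")
      case True then show ?thesis by simp
    next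
      case False
      have "eventually (\<lambda>y. prob {w \<in> space M. \<bar>X i w\<bar> > t * h y \<and> X j w > y} \<le> r * tail M (ord_stat X n n) y) at_top"
        by (rule tendsto_zero_eventually_le[OF star[OF i j False t0] r0 evFpos])
      then show ?thesis by (rule eventually_mono) simp
    qed
  qed
qed

lemma pair_uniform:
  assumes eps: "0 < \<epsilon>"
  shows "\<exists>x0. \<forall>x\<ge>x0. \<forall>c. okc c \<longrightarrow> (\<forall>i\<in>{1..n}. \<forall>j\<in>{1..n}. i \<noteq> j \<longrightarrow>
    prob {w\<in>space M. x < c 0 * X i w \<and> x < c 0 * X j w}
      \<le> \<epsilon> * prob {w\<in>space M. x < c 0 * ord_stat X n n w})"
proof -
  let ?F = "tail M (ord_stat X n n)"
  have "eventually (\<lambda>y. (\<forall>i\<in>{1..n}. \<forall>j\<in>{1..n}. i \<noteq> j \<longrightarrow>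
      prob {w \<in> space M. \<bar>X i w\<bar> > 1 * h y \<and> X j w > y} \<le> \<epsilon> * ?F y) \<and> h y < y) at_top"
    by (rule eventually_conj[OF evpairs[OF zero_less_one eps] hsmall])
  then obtain y0 where y0: "\<And>y. y \<ge> y0 \<Longrightarrow> (\<forall>i\<in>{1..n}. \<forall>j\<in>{1..n}. i \<noteq> j \<longrightarrow>
      prob {w \<in> space M. \<bar>X i w\<bar> > 1 * h y \<and> X j w > y} \<le> \<epsilon> * ?F y) \<and> h y < y"
    unfolding eventually_at_top_linorder by blast
  show ?thesis
  proof (intro exI allI impI ballI)
    fix x c i j assume x: "b * max y0 0 \<le> x" and c: "okc c" and i: "i \<in> {1..n}" and j: "j \<in> {1..n}"
      and ij: "i \<noteq> j"
    have ca: "a \<le> c 0" and cb: "c 0 \<le> b" using c unfolding okc_def by auto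
    have c0: "0 < c 0" using ab ca by linarith
    define y where "y = x / c 0"
    have yy: "y0 \<le> y" "0 \<le> y" unfolding y_def using y_ge[OF x ca cb] by auto
    have Fp: "prob {w \<in> space M. \<bar>X i w\<bar> > 1 * h y \<and> X j w > y} \<le> \<epsilon> * ?F y" and hy: "h y < y"
      using y0[OF yy(1)] i j ij by auto
    have Es: "{w \<in> space M. \<bar>X i w\<bar> > 1 * h y \<and> X j w > y} \<in> events"
    proof -
      have [measurable]: "X i \<in> borel_measurable M" "X j \<in> borel_measurable M" using i j by (auto intro!: Xmeas)
      show ?thesis by measurable
    qed
    have "{w\<in>space M. x < c 0 * X i w \<and> x < c 0 * X j w} \<subseteq> {w \<in> space M. \<bar>X i w\<bar> > 1 * h y \<and> X j w > y}"
    proof safe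
      fix w assume w: "w \<in> space M" "x < c 0 * X i w" "x < c 0 * X j w"
      have "y < X i w" "y < X j w" using w c0 unfolding y_def by (auto simp: pos_divide_less_eq mult.commute)
      then show "1 * h y < \<bar>X i w\<bar>" "y < X j w" using hy by auto
    qed
    then have "prob {w\<in>space M. x < c 0 * X i w \<and> x < c 0 * X j w} \<le> \<epsilon> * ?F y"
      using Fp Es by (meson finite_measure_mono order.trans)
    then show "prob {w\<in>space M. x < c 0 * X i w \<and> x < c 0 * X j w}
      \<le> \<epsilon> * prob {w\<in>space M. x < c 0 * ord_stat X n n w}"
      unfolding y_def cM_eq[OF c0] .
  qed
qed

end

lemma ord_stat_cong:
  assumes "\<And>i. i \<in> {1..n} \<Longrightarrow> X i w = X' i w'"
  shows "ord_stat X n k w = ord_stat X' n k w'"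
proof -
  have "map (\<lambda>i. X i w) [1..<Suc n] = map (\<lambda>i. X' i w') [1..<Suc n]"
    using assms by (intro map_cong) auto
  then show ?thesis unfolding ord_stat_def by (simp only:)
qed

locale core_full = core +
  fixes C :: "nat \<Rightarrow> 'a \<Rightarrow> real"
  assumes Cmeas: "\<And>i. i < n \<Longrightarrow> C i \<in> borel_measurable M"
    and indep: "prob_space.indep_var M
        (Pi\<^sub>M {..<n} (\<lambda>_. borel)) (\<lambda>w. \<lambda>i\<in>{..<n}. C i w)
        (Pi\<^sub>M {1..n} (\<lambda>_. borel)) (\<lambda>w. \<lambda>i\<in>{1..n}. X i w)"
    and C0: "measure M {w \<in> space M. a \<le> C 0 w \<and> C 0 w \<le> b} = 1"
    and Ci: "(\<forall>i\<in>{1..n-1}. measure M {w \<in> space M. 0 \<le> C i w \<and> C i w \<le> d} = 1)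
           \<or> ((\<forall>i\<in>{1..n}. AE w in M. X i w \<ge> 0) \<and>
              (\<forall>i\<in>{1..n-1}. measure M {w \<in> space M. \<bar>C i w\<bar> \<le> d} = 1))"
begin

abbreviation "MA \<equiv> Pi\<^sub>M {..<n} (\<lambda>_. borel :: real measure)"
abbreviation "MB \<equiv> Pi\<^sub>M {1..n} (\<lambda>_. borel :: real measure)"
abbreviation "Y \<equiv> (\<lambda>w. \<lambda>i\<in>{..<n}. C i w)"
abbreviation "Z \<equiv> (\<lambda>w. \<lambda>i\<in>{1..n}. X i w)"

lemma Ymeas: "Y \<in> measurable M MA" by (rule indep_var_rv1[OF indep])
lemma Zmeas: "Z \<in> measurable M MB" by (rule indep_var_rv2[OF indep])

lemma compare_app:
  fixes \<Phi> \<Psi> :: "(nat \<Rightarrow> real) \<Rightarrow> (nat \<Rightarrow> real) \<Rightarrow> bool"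
  assumes A: "{p\<in>space (MA \<Otimes>\<^sub>M MB). \<Phi> (fst p) (snd p)} \<in> sets (MA \<Otimes>\<^sub>M MB)"
    and B: "{p\<in>space (MA \<Otimes>\<^sub>M MB). \<Psi> (fst p) (snd p)} \<in> sets (MA \<Otimes>\<^sub>M MB)"
    and k: "0 \<le> k"
    and ae: "AE c in distr M MA Y. prob {w\<in>space M. \<Phi> c (Z w)} \<le> k * prob {w\<in>space M. \<Psi> c (Z w)}"
  shows "prob {w\<in>space M. \<Phi> (Y w) (Z w)} \<le> k * prob {w\<in>space M. \<Psi> (Y w) (Z w)}"
proof -
  have sp: "(c, Z w) \<in> space (MA \<Otimes>\<^sub>M MB)" if "c \<in> space MA" "w \<in> space M" for c w
    using that measurable_space[OF Zmeas] by (simp add: space_pair_measure)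
  have eqc: "{w\<in>space M. (c, Z w) \<in> {p\<in>space (MA \<Otimes>\<^sub>M MB). \<Theta> (fst p) (snd p)}} = {w\<in>space M. \<Theta> c (Z w)}"
    if "c \<in> space MA" for c \<Theta> using sp[OF that] by auto
  have eqY: "{w\<in>space M. (Y w, Z w) \<in> {p\<in>space (MA \<Otimes>\<^sub>M MB). \<Theta> (fst p) (snd p)}} = {w\<in>space M. \<Theta> (Y w) (Z w)}"
    for \<Theta> using sp measurable_space[OF Ymeas] by auto
  have ae': "AE c in distr M MA Y. prob {w\<in>space M. (c, Z w) \<in> {p\<in>space (MA \<Otimes>\<^sub>M MB). \<Phi> (fst p) (snd p)}}
     \<le> k * prob {w\<in>space M. (c, Z w) \<in> {p\<in>space (MA \<Otimes>\<^sub>M MB). \<Psi> (fst p) (snd p)}}"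
    using ae AE_space
  proof eventually_elim
    case (elim c)
    then have c: "c \<in> space MA" by simp
    show ?case unfolding eqc[OF c] by (rule elim(1))
  qed
  show ?thesis
    using indep_compare[OF P indep A B k ae'] unfolding eqY .
qed

lemma comp_meas: "i < n \<Longrightarrow> (\<lambda>c. c i) \<in> borel_measurable MA"
  by (rule measurable_component_singleton) simp

lemma AE_Y:
  assumes i: "i < n" and S: "{x \<in> space borel. Q x} \<in> sets borel"
    and pr: "prob {w \<in> space M. Q (C i w)} = 1"
  shows "AE c in distr M MA Y. Q (c i)"
proof -
  have [measurable]: "(\<lambda>c. c i) \<in> borel_measurable MA" by (rule comp_meas[OF i])
  have Sm: "{c \<in> space MA. Q (c i)} \<in> sets MA"
  proof -
    have "{c \<in> space MA. Q (c i)} = (\<lambda>c. c i) -` {x \<in> space borel. Q x} \<inter> space MA" by auto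
    also have "\<dots> \<in> sets MA" using S by (rule measurable_sets[OF comp_meas[OF i]])
    finally show ?thesis .
  qed
  have "AE w in M. w \<in> {w \<in> space M. Q (C i w)}" by (rule AE_prob_1[OF pr])
  then have "AE w in M. Q (Y w i)" by (rule eventually_mono) (use i in simp)
  then show ?thesis using AE_distr_iff[OF Ymeas Sm] by simp
qed

lemma okAE: "AE c in distr M MA Y. okc c"
proof -
  have n0: "0 < n" using n2 by simp
  have A0: "AE c in distr M MA Y. a \<le> c 0 \<and> c 0 \<le> b"
    by (rule AE_Y[OF n0 _ C0]) measurable
  show ?thesis
  proof (cases "\<forall>i\<in>{1..n-1}. measure M {w \<in> space M. 0 \<le> C i w \<and> C i w \<le> d} = 1")
    case True
    have "AE c in distr M MA Y. \<forall>i\<in>{1..n-1}. 0 \<le> c i \<and> c i \<le> d"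
    proof (rule AE_finite_allI)
      fix i assume i: "i \<in> {1..n-1}"
      have "i < n" using i n2 by auto
      then show "AE c in distr M MA Y. 0 \<le> c i \<and> c i \<le> d"
        by (rule AE_Y) (use True i in \<open>auto\<close>)
    qed simp
    with A0 show ?thesis unfolding okc_def by eventually_elim auto
  next
    case False
    then have V2: "(\<forall>i\<in>{1..n}. AE w in M. X i w \<ge> 0)" and
      V2': "\<forall>i\<in>{1..n-1}. measure M {w \<in> space M. \<bar>C i w\<bar> \<le> d} = 1" using Ci by auto
    have AX: "AE w in M. \<forall>i\<in>{1..n}. 0 \<le> X i w"
      using V2 by (intro AE_finite_allI) auto
    have "AE c in distr M MA Y. \<forall>i\<in>{1..n-1}. \<bar>c i\<bar> \<le> d"
    proof (rule AE_finite_allI)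
      fix i assume i: "i \<in> {1..n-1}"
      have "i < n" using i n2 by auto
      then show "AE c in distr M MA Y. \<bar>c i\<bar> \<le> d"
        by (rule AE_Y) (use V2' i in \<open>auto\<close>)
    qed simp
    with A0 have "AE c in distr M MA Y. (a \<le> c 0 \<and> c 0 \<le> b) \<and> (\<forall>i\<in>{1..n-1}. \<bar>c i\<bar> \<le> d)"
      by eventually_elim auto
    then show ?thesis
    proof (rule eventually_mono)
      fix c assume "(a \<le> c 0 \<and> c 0 \<le> b) \<and> (\<forall>i\<in>{1..n-1}. \<bar>c i\<bar> \<le> d)"
      then show "okc c" unfolding okc_def using AX by auto
    qed
  qed
qed

abbreviation "OS m z \<equiv> ord_stat (\<lambda>k (z::nat\<Rightarrow>real). z k) n m z"

lemma OSZ: "OS m (Z w) = ord_stat X n m w"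
  by (rule ord_stat_cong) simp

lemma OS_meas: "1 \<le> m \<Longrightarrow> m \<le> n \<Longrightarrow> (\<lambda>p. OS m (snd p)) \<in> borel_measurable (MA \<Otimes>\<^sub>M MB)"
proof -
  assume m: "1 \<le> m" "m \<le> n"
  have "(\<lambda>z. OS m z) \<in> borel_measurable MB"
  proof (rule ord_stat_measurable[OF _ m])
    fix i :: nat assume "i \<in> {1..n}"
    then show "(\<lambda>z. z i) \<in> borel_measurable MB" by (rule measurable_component_singleton)
  qed
  then show ?thesis by (rule measurable_compose[OF measurable_snd])
qed

lemma fst_meas: "i < n \<Longrightarrow> (\<lambda>p. fst p i) \<in> borel_measurable (MA \<Otimes>\<^sub>M MB)"
  by (rule measurable_compose[OF measurable_fst comp_meas])

lemma snd_meas: "i \<in> {1..n} \<Longrightarrow> (\<lambda>p. snd p i) \<in> borel_measurable (MA \<Otimes>\<^sub>M MB)"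
  by (rule measurable_compose[OF measurable_snd measurable_component_singleton])

lemma gt_set:
  fixes f :: "'b \<Rightarrow> real"
  assumes "f \<in> borel_measurable N" shows "{p\<in>space N. x < f p} \<in> sets N"
  using assms[unfolded borel_measurable_iff_greater] by blast

lemma S_pmeas: "(\<lambda>p. \<Sum>i=0..n-1. fst p i * OS (n-i) (snd p)) \<in> borel_measurable (MA \<Otimes>\<^sub>M MB)"
proof (rule borel_measurable_sum)
  fix i assume i: "i \<in> {0..n-1}"
  have [measurable]: "(\<lambda>p. fst p i) \<in> borel_measurable (MA \<Otimes>\<^sub>M MB)" using i n2 by (intro fst_meas) auto
  have [measurable]: "(\<lambda>p. OS (n-i) (snd p)) \<in> borel_measurable (MA \<Otimes>\<^sub>M MB)" using i n2 by (intro OS_meas) auto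
  show "(\<lambda>p. fst p i * OS (n-i) (snd p)) \<in> borel_measurable (MA \<Otimes>\<^sub>M MB)" by measurable
qed

lemma M_pmeas: "(\<lambda>p. fst p 0 * OS n (snd p)) \<in> borel_measurable (MA \<Otimes>\<^sub>M MB)"
proof -
  have [measurable]: "(\<lambda>p. fst p 0) \<in> borel_measurable (MA \<Otimes>\<^sub>M MB)" using n2 by (intro fst_meas) auto
  have [measurable]: "(\<lambda>p. OS n (snd p)) \<in> borel_measurable (MA \<Otimes>\<^sub>M MB)" using n2 by (intro OS_meas) auto
  show ?thesis by measurable
qed

lemma S_eq: "(\<Sum>i=0..n-1. Y w i * ord_stat X n (n-i) w) = (\<Sum>i=0..n-1. C i w * ord_stat X n (n-i) w)"
  using n2 by (intro sum.cong refl) auto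

lemma Y0: "Y w 0 = C 0 w" using n2 by simp

lemma upper_global:
  assumes eps: "0 < \<epsilon>"
  shows "\<exists>x0. \<forall>x\<ge>x0. prob {w\<in>space M. x < (\<Sum>i=0..n-1. C i w * ord_stat X n (n-i) w)}
      \<le> (1 + 2*\<epsilon>) * prob {w\<in>space M. x < C 0 w * ord_stat X n n w}"
proof -
  obtain x0 where x0: "\<And>x c. x \<ge> x0 \<Longrightarrow> okc c \<Longrightarrow>
    prob {w\<in>space M. x < (\<Sum>i=0..n-1. c i * ord_stat X n (n-i) w)}
      \<le> (1 + 2*\<epsilon>) * prob {w\<in>space M. x < c 0 * ord_stat X n n w}"
    using upper_uniform[OF eps] by blast
  show ?thesis
  proof (intro exI allI impI)
    fix x assume x: "x0 \<le> x"
    have "prob {w\<in>space M. (\<lambda>c z. x < (\<Sum>i=0..n-1. c i * OS (n-i) z)) (Y w) (Z w)}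
      \<le> (1 + 2*\<epsilon>) * prob {w\<in>space M. (\<lambda>c z. x < c 0 * OS n z) (Y w) (Z w)}"
    proof (rule compare_app)
      show "{p \<in> space (MA \<Otimes>\<^sub>M MB). x < (\<Sum>i=0..n-1. fst p i * OS (n-i) (snd p))} \<in> sets (MA \<Otimes>\<^sub>M MB)"
        by (rule gt_set[OF S_pmeas])
      show "{p \<in> space (MA \<Otimes>\<^sub>M MB). x < fst p 0 * OS n (snd p)} \<in> sets (MA \<Otimes>\<^sub>M MB)"
        by (rule gt_set[OF M_pmeas])
      show "0 \<le> 1 + 2 * \<epsilon>" using eps by simp
      show "AE c in distr M MA Y. prob {w \<in> space M. x < (\<Sum>i=0..n-1. c i * OS (n-i) (Z w))}
          \<le> (1 + 2 * \<epsilon>) * prob {w \<in> space M. x < c 0 * OS n (Z w)}"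
        using okAE by (rule eventually_mono) (simp only: OSZ x0[OF x])
    qed
    then show "prob {w\<in>space M. x < (\<Sum>i=0..n-1. C i w * ord_stat X n (n-i) w)}
      \<le> (1 + 2*\<epsilon>) * prob {w\<in>space M. x < C 0 w * ord_stat X n n w}"
      by (simp only: OSZ S_eq Y0)
  qed
qed

lemma lower_global:
  assumes eps: "0 < \<epsilon>" "\<epsilon> < 1/2"
  shows "\<exists>x0. \<forall>x\<ge>x0. (1 - 2*\<epsilon>) * prob {w\<in>space M. x < C 0 w * ord_stat X n n w}
      \<le> prob {w\<in>space M. x < (\<Sum>i=0..n-1. C i w * ord_stat X n (n-i) w)}"
proof -
  obtain x0 where x0: "\<And>x c. x \<ge> x0 \<Longrightarrow> okc c \<Longrightarrow>
    (1 - 2*\<epsilon>) * prob {w\<in>space M. x < c 0 * ord_stat X n n w}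
      \<le> prob {w\<in>space M. x < (\<Sum>i=0..n-1. c i * ord_stat X n (n-i) w)}"
    using lower_uniform[OF eps(1)] by blast
  have e2: "0 < 1 - 2*\<epsilon>" using eps by simp
  show ?thesis
  proof (intro exI allI impI)
    fix x assume x: "x0 \<le> x"
    have "prob {w\<in>space M. (\<lambda>c z. x < c 0 * OS n z) (Y w) (Z w)}
      \<le> (1 / (1 - 2*\<epsilon>)) * prob {w\<in>space M. (\<lambda>c z. x < (\<Sum>i=0..n-1. c i * OS (n-i) z)) (Y w) (Z w)}"
    proof (rule compare_app)
      show "{p \<in> space (MA \<Otimes>\<^sub>M MB). x < (\<Sum>i=0..n-1. fst p i * OS (n-i) (snd p))} \<in> sets (MA \<Otimes>\<^sub>M MB)"
        by (rule gt_set[OF S_pmeas])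
      show "{p \<in> space (MA \<Otimes>\<^sub>M MB). x < fst p 0 * OS n (snd p)} \<in> sets (MA \<Otimes>\<^sub>M MB)"
        by (rule gt_set[OF M_pmeas])
      show "0 \<le> 1 / (1 - 2*\<epsilon>)" using e2 by simp
      show "AE c in distr M MA Y. prob {w \<in> space M. x < c 0 * OS n (Z w)}
          \<le> 1 / (1 - 2*\<epsilon>) * prob {w \<in> space M. x < (\<Sum>i=0..n-1. c i * OS (n-i) (Z w))}"
        using okAE
      proof (rule eventually_mono)
        fix c assume "okc c"
        from x0[OF x this] show "prob {w \<in> space M. x < c 0 * OS n (Z w)}
          \<le> 1 / (1 - 2*\<epsilon>) * prob {w \<in> space M. x < (\<Sum>i=0..n-1. c i * OS (n-i) (Z w))}"
          using e2 by (simp only: OSZ) (simp add: field_simps)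
      qed
    qed
    then have "prob {w\<in>space M. x < C 0 w * ord_stat X n n w}
      \<le> (1 / (1 - 2*\<epsilon>)) * prob {w\<in>space M. x < (\<Sum>i=0..n-1. C i w * ord_stat X n (n-i) w)}"
      by (simp only: OSZ S_eq Y0)
    then show "(1 - 2*\<epsilon>) * prob {w\<in>space M. x < C 0 w * ord_stat X n n w}
      \<le> prob {w\<in>space M. x < (\<Sum>i=0..n-1. C i w * ord_stat X n (n-i) w)}"
      using e2 by (simp add: field_simps)
  qed
qed

lemma pair_global:
  assumes eps: "0 < \<epsilon>"
  shows "\<exists>x0. \<forall>x\<ge>x0. \<forall>i\<in>{1..n}. \<forall>j\<in>{1..n}. i \<noteq> j \<longrightarrow>
    prob {w\<in>space M. x < C 0 w * X i w \<and> x < C 0 w * X j w}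
      \<le> \<epsilon> * prob {w\<in>space M. x < C 0 w * ord_stat X n n w}"
proof -
  obtain x0 where x0: "\<And>x c i j. x \<ge> x0 \<Longrightarrow> okc c \<Longrightarrow> i\<in>{1..n} \<Longrightarrow> j\<in>{1..n} \<Longrightarrow> i \<noteq> j \<Longrightarrow>
    prob {w\<in>space M. x < c 0 * X i w \<and> x < c 0 * X j w}
      \<le> \<epsilon> * prob {w\<in>space M. x < c 0 * ord_stat X n n w}"
    using pair_uniform[OF eps] by blast
  show ?thesis
  proof (intro exI allI impI ballI)
    fix x i j assume x: "x0 \<le> x" and i: "i \<in> {1..n}" and j: "j \<in> {1..n}" and ij: "i \<noteq> j"
    have "prob {w\<in>space M. (\<lambda>c z. x < c 0 * z i \<and> x < c 0 * z j) (Y w) (Z w)}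
      \<le> \<epsilon> * prob {w\<in>space M. (\<lambda>c z. x < c 0 * OS n z) (Y w) (Z w)}"
    proof (rule compare_app)
      have [measurable]: "(\<lambda>p. fst p 0) \<in> borel_measurable (MA \<Otimes>\<^sub>M MB)" using n2 by (intro fst_meas) auto
      have [measurable]: "(\<lambda>p. snd p i) \<in> borel_measurable (MA \<Otimes>\<^sub>M MB)" using i by (rule snd_meas)
      have [measurable]: "(\<lambda>p. snd p j) \<in> borel_measurable (MA \<Otimes>\<^sub>M MB)" using j by (rule snd_meas)
      show "{p \<in> space (MA \<Otimes>\<^sub>M MB). x < fst p 0 * snd p i \<and> x < fst p 0 * snd p j} \<in> sets (MA \<Otimes>\<^sub>M MB)"
        by measurable
      show "{p \<in> space (MA \<Otimes>\<^sub>M MB). x < fst p 0 * OS n (snd p)} \<in> sets (MA \<Otimes>\<^sub>M MB)"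
        by (rule gt_set[OF M_pmeas])
      show "0 \<le> \<epsilon>" using eps by simp
      show "AE c in distr M MA Y. prob {w \<in> space M. x < c 0 * Z w i \<and> x < c 0 * Z w j}
          \<le> \<epsilon> * prob {w \<in> space M. x < c 0 * OS n (Z w)}"
        using okAE
      proof (rule eventually_mono)
        fix c assume "okc c"
        from x0[OF x this i j ij] show "prob {w \<in> space M. x < c 0 * Z w i \<and> x < c 0 * Z w j}
          \<le> \<epsilon> * prob {w \<in> space M. x < c 0 * OS n (Z w)}"
          using i j by (simp only: OSZ) simp
      qed
    qed
    then show "prob {w\<in>space M. x < C 0 w * X i w \<and> x < C 0 w * X j w}
      \<le> \<epsilon> * prob {w\<in>space M. x < C 0 w * ord_stat X n n w}"
      using i j by (simp only: OSZ Y0) simp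
  qed
qed

lemma AE_C0: "AE w in M. a \<le> C 0 w \<and> C 0 w \<le> b"
proof -
  have "AE w in M. w \<in> {w \<in> space M. a \<le> C 0 w \<and> C 0 w \<le> b}" by (rule AE_prob_1[OF C0])
  then show ?thesis by (rule eventually_mono) simp
qed

lemma C0M_sets: "{w\<in>space M. x < C 0 w * ord_stat X n n w} \<in> events"
proof -
  have [measurable]: "C 0 \<in> borel_measurable M" using n2 by (intro Cmeas) auto
  have [measurable]: "ord_stat X n n \<in> borel_measurable M" using n2 by (intro os_meas) auto
  show ?thesis by measurable
qed

lemma Cpos:
  assumes x: "0 \<le> x"
  shows "0 < prob {w\<in>space M. x < C 0 w * ord_stat X n n w}"
proof -
  have "0 < tail M (ord_stat X n n) (x / a)" using x ab by (intro Fpos) simp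
  also have "tail M (ord_stat X n n) (x / a) = prob {w\<in>space M. x / a < ord_stat X n n w}"
    unfolding tail_def ..
  also have "\<dots> \<le> prob {w\<in>space M. x < C 0 w * ord_stat X n n w}"
  proof (rule finite_measure_mono_AE[OF _ C0M_sets])
    show "AE w in M. w \<in> {w \<in> space M. x / a < ord_stat X n n w} \<longrightarrow> w \<in> {w \<in> space M. x < C 0 w * ord_stat X n n w}"
      using AE_C0
    proof (rule eventually_mono)
      fix w assume c: "a \<le> C 0 w \<and> C 0 w \<le> b"
      show "w \<in> {w \<in> space M. x / a < ord_stat X n n w} \<longrightarrow> w \<in> {w \<in> space M. x < C 0 w * ord_stat X n n w}"
      proof
        assume "w \<in> {w \<in> space M. x / a < ord_stat X n n w}"
        then have ws: "w \<in> space M" and m: "x / a < ord_stat X n n w" by auto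
        have "x < a * ord_stat X n n w" using m ab by (simp add: pos_divide_less_eq mult.commute)
        also have "\<dots> \<le> C 0 w * ord_stat X n n w"
        proof (rule mult_right_mono)
          show "a \<le> C 0 w" using c by simp
          have "0 \<le> x / a" using x ab by simp
          then show "0 \<le> ord_stat X n n w" using m by simp
        qed
        finally show "w \<in> {w \<in> space M. x < C 0 w * ord_stat X n n w}" using ws by simp
      qed
    qed
  qed
  finally show ?thesis .
qed

lemma ratio_tendsto:
  fixes p q :: "real \<Rightarrow> real"
  assumes pos: "eventually (\<lambda>x. 0 < p x) at_top"
    and bnd: "\<And>e. 0 < e \<Longrightarrow> eventually (\<lambda>x. (1 - e) * p x \<le> q x \<and> q x \<le> (1 + e) * p x) at_top"
  shows "((\<lambda>x. q x / p x) \<longlongrightarrow> 1) at_top"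
proof (rule tendstoI)
  fix e :: real assume e: "0 < e"
  have "eventually (\<lambda>x. (1 - e/2) * p x \<le> q x \<and> q x \<le> (1 + e/2) * p x) at_top" using e by (intro bnd) simp
  with pos show "eventually (\<lambda>x. dist (q x / p x) 1 < e) at_top"
  proof eventually_elim
    case (elim x)
    have "1 - e/2 \<le> q x / p x" using elim by (simp add: pos_le_divide_eq)
    moreover have "q x / p x \<le> 1 + e/2" using elim by (simp add: pos_divide_le_eq)
    ultimately show ?case using e by (simp add: dist_real_def abs_if)
  qed
qed

lemma concl1:
  "(\<lambda>x. prob {w\<in>space M. (\<Sum>i=0..n-1. C i w * ord_stat X n (n-i) w) > x})
     \<sim>[at_top] (\<lambda>x. prob {w\<in>space M. C 0 w * ord_stat X n n w > x})"
proof (rule asymp_equivI', rule ratio_tendsto)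
  show "eventually (\<lambda>x. 0 < prob {w\<in>space M. C 0 w * ord_stat X n n w > x}) at_top"
    using eventually_ge_at_top[of "0::real"] by eventually_elim (rule Cpos)
  fix e :: real assume e: "0 < e"
  define \<epsilon> where "\<epsilon> = min (e/2) (1/4)"
  have eps: "0 < \<epsilon>" "\<epsilon> < 1/2" "2*\<epsilon> \<le> e" unfolding \<epsilon>_def using e by auto
  obtain x0 where x0: "\<forall>x\<ge>x0. prob {w\<in>space M. x < (\<Sum>i=0..n-1. C i w * ord_stat X n (n-i) w)}
      \<le> (1 + 2*\<epsilon>) * prob {w\<in>space M. x < C 0 w * ord_stat X n n w}"
    using upper_global[OF eps(1)] by blast
  obtain x1 where x1: "\<forall>x\<ge>x1. (1 - 2*\<epsilon>) * prob {w\<in>space M. x < C 0 w * ord_stat X n n w}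
      \<le> prob {w\<in>space M. x < (\<Sum>i=0..n-1. C i w * ord_stat X n (n-i) w)}"
    using lower_global[OF eps(1,2)] by blast
  show "eventually (\<lambda>x. (1 - e) * prob {w\<in>space M. C 0 w * ord_stat X n n w > x}
      \<le> prob {w\<in>space M. (\<Sum>i=0..n-1. C i w * ord_stat X n (n-i) w) > x} \<and>
      prob {w\<in>space M. (\<Sum>i=0..n-1. C i w * ord_stat X n (n-i) w) > x}
      \<le> (1 + e) * prob {w\<in>space M. C 0 w * ord_stat X n n w > x}) at_top"
    unfolding eventually_at_top_linorder
  proof (intro exI allI impI)
    fix x assume x: "max x0 x1 \<le> x"
    let ?p = "prob {w\<in>space M. x < C 0 w * ord_stat X n n w}"
    let ?q = "prob {w\<in>space M. x < (\<Sum>i=0..n-1. C i w * ord_stat X n (n-i) w)}"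
    have p0: "0 \<le> ?p" by simp
    have u: "?q \<le> (1 + 2*\<epsilon>) * ?p" using x0 x by simp
    have l: "(1 - 2*\<epsilon>) * ?p \<le> ?q" using x1 x by simp
    have "(1 - e) * ?p \<le> (1 - 2*\<epsilon>) * ?p" using eps p0 by (intro mult_right_mono) auto
    moreover have "(1 + 2*\<epsilon>) * ?p \<le> (1 + e) * ?p" using eps p0 by (intro mult_right_mono) auto
    ultimately show "(1 - e) * ?p \<le> ?q \<and> ?q \<le> (1 + e) * ?p" using u l by linarith
  qed
qed

lemma Ai_sets: "i \<in> {1..n} \<Longrightarrow> {w\<in>space M. x < C 0 w * X i w} \<in> events"
proof -
  assume i: "i \<in> {1..n}"
  have [measurable]: "C 0 \<in> borel_measurable M" using n2 by (intro Cmeas) auto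
  have [measurable]: "X i \<in> borel_measurable M" using i by (rule Xmeas)
  show ?thesis by measurable
qed

lemma concl2:
  "(\<lambda>x. prob {w\<in>space M. C 0 w * ord_stat X n n w > x})
     \<sim>[at_top] (\<lambda>x. \<Sum>i=1..n. prob {w\<in>space M. C 0 w * X i w > x})"
proof (rule asymp_equivI'[THEN asymp_equiv_symI], rule ratio_tendsto)
  show "eventually (\<lambda>x. 0 < prob {w\<in>space M. C 0 w * ord_stat X n n w > x}) at_top"
    using eventually_ge_at_top[of "0::real"] by eventually_elim (rule Cpos)
  fix e :: real assume e: "0 < e"
  define r where "r = e / real (n * n)"
  have r0: "0 < r" unfolding r_def using e n2 by simp
  obtain x0 where x0: "\<forall>x\<ge>x0. \<forall>i\<in>{1..n}. \<forall>j\<in>{1..n}. i \<noteq> j \<longrightarrow>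
    prob {w\<in>space M. x < C 0 w * X i w \<and> x < C 0 w * X j w}
      \<le> r * prob {w\<in>space M. x < C 0 w * ord_stat X n n w}"
    using pair_global[OF r0] by blast
  show "eventually (\<lambda>x. (1 - e) * prob {w\<in>space M. C 0 w * ord_stat X n n w > x}
      \<le> (\<Sum>i=1..n. prob {w\<in>space M. C 0 w * X i w > x}) \<and>
      (\<Sum>i=1..n. prob {w\<in>space M. C 0 w * X i w > x})
      \<le> (1 + e) * prob {w\<in>space M. C 0 w * ord_stat X n n w > x}) at_top"
    unfolding eventually_at_top_linorder
  proof (intro exI allI impI)
    fix x assume x: "x0 \<le> x"
    let ?p = "prob {w\<in>space M. x < C 0 w * ord_stat X n n w}"
    define A where "A = (\<lambda>i. {w\<in>space M. x < C 0 w * X i w})"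
    have As: "A i \<in> events" if "i \<in> {1..n}" for i unfolding A_def using that by (rule Ai_sets)
    have p0: "0 \<le> ?p" by simp
    have low: "?p \<le> (\<Sum>i=1..n. prob (A i))"
    proof -
      have "{w\<in>space M. x < C 0 w * ord_stat X n n w} \<subseteq> (\<Union>i\<in>{1..n}. A i)"
      proof
        fix w assume w: "w \<in> {w\<in>space M. x < C 0 w * ord_stat X n n w}"
        have "\<exists>j\<in>{1..n}. ord_stat X n n w = X j w" using n2 by (intro ord_stat_in) auto
        then obtain j where j: "j \<in> {1..n}" "ord_stat X n n w = X j w" by metis
        then have "w \<in> A j" using w unfolding A_def by simp
        then show "w \<in> (\<Union>i\<in>{1..n}. A i)" using j(1) by blast
      qed
      then have "?p \<le> prob (\<Union>i\<in>{1..n}. A i)"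
        using As by (intro finite_measure_mono) (auto intro!: sets.finite_UN)
      also have "\<dots> \<le> (\<Sum>i=1..n. prob (A i))"
        using As by (intro finite_measure_subadditive_finite) auto
      finally show ?thesis .
    qed
    define D where "D = (\<lambda>i. A i - (\<Union>j\<in>{1..n}-{i}. A j))"
    have Ds: "D i \<in> events" if "i \<in> {1..n}" for i unfolding D_def using As that
      by (intro sets.Diff sets.finite_UN) auto
    have AD: "prob (A i) \<le> prob (D i) + (\<Sum>j\<in>{1..n}-{i}. prob (A i \<inter> A j))" if i: "i \<in> {1..n}" for i
    proof -
      have "A i \<subseteq> D i \<union> (\<Union>j\<in>{1..n}-{i}. A i \<inter> A j)" unfolding D_def by blast
      then have "prob (A i) \<le> prob (D i \<union> (\<Union>j\<in>{1..n}-{i}. A i \<inter> A j))"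
        using As Ds i by (intro finite_measure_mono) (auto intro!: sets.Un sets.finite_UN sets.Int)
      also have "\<dots> \<le> prob (D i) + prob (\<Union>j\<in>{1..n}-{i}. A i \<inter> A j)"
        using As Ds i by (intro measure_Un_le) (auto intro!: sets.finite_UN sets.Int)
      also have "prob (\<Union>j\<in>{1..n}-{i}. A i \<inter> A j) \<le> (\<Sum>j\<in>{1..n}-{i}. prob (A i \<inter> A j))"
        using As i by (intro finite_measure_subadditive_finite) (auto intro!: sets.Int)
      finally show ?thesis by simp
    qed
    have disj: "disjoint_family_on D {1..n}"
      unfolding disjoint_family_on_def D_def by blast
    have "(\<Sum>i=1..n. prob (D i)) = prob (\<Union>i\<in>{1..n}. D i)"
      using Ds disj by (intro finite_measure_finite_Union[symmetric]) auto
    also have "\<dots> \<le> ?p"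
    proof (rule finite_measure_mono_AE[OF _ C0M_sets])
      show "AE w in M. w \<in> (\<Union>i\<in>{1..n}. D i) \<longrightarrow> w \<in> {w \<in> space M. x < C 0 w * ord_stat X n n w}"
        using AE_C0
      proof (rule eventually_mono)
        fix w assume c: "a \<le> C 0 w \<and> C 0 w \<le> b"
        show "w \<in> (\<Union>i\<in>{1..n}. D i) \<longrightarrow> w \<in> {w \<in> space M. x < C 0 w * ord_stat X n n w}"
        proof
          assume "w \<in> (\<Union>i\<in>{1..n}. D i)"
          then obtain i where i: "i \<in> {1..n}" "w \<in> A i" unfolding D_def by blast
          then have ws: "w \<in> space M" and xi: "x < C 0 w * X i w" unfolding A_def by auto
          have "C 0 w * X i w \<le> C 0 w * ord_stat X n n w"
            using c ab ord_stat_max_ge[OF i(1)] by (intro mult_left_mono) auto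
          then show "w \<in> {w \<in> space M. x < C 0 w * ord_stat X n n w}" using ws xi by simp
        qed
      qed
    qed
    finally have sD: "(\<Sum>i=1..n. prob (D i)) \<le> ?p" .
    have pairb: "(\<Sum>j\<in>{1..n}-{i}. prob (A i \<inter> A j)) \<le> real n * (r * ?p)" if i: "i \<in> {1..n}" for i
    proof -
      have "(\<Sum>j\<in>{1..n}-{i}. prob (A i \<inter> A j)) \<le> (\<Sum>j\<in>{1..n}-{i}. r * ?p)"
      proof (rule sum_mono)
        fix j assume j: "j \<in> {1..n}-{i}"
        have "A i \<inter> A j = {w\<in>space M. x < C 0 w * X i w \<and> x < C 0 w * X j w}" unfolding A_def by auto
        then show "prob (A i \<inter> A j) \<le> r * ?p" using x0 x i j by auto
      qed
      also have "\<dots> = real (card ({1..n}-{i})) * (r * ?p)" by simp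
      also have "\<dots> \<le> real n * (r * ?p)" using r0 p0
        by (intro mult_right_mono) (auto simp: card_Diff_singleton_if)
      finally show ?thesis .
    qed
    have "(\<Sum>i=1..n. prob (A i)) \<le> (\<Sum>i=1..n. prob (D i) + (\<Sum>j\<in>{1..n}-{i}. prob (A i \<inter> A j)))"
      by (rule sum_mono) (rule AD)
    also have "\<dots> = (\<Sum>i=1..n. prob (D i)) + (\<Sum>i=1..n. \<Sum>j\<in>{1..n}-{i}. prob (A i \<inter> A j))"
      by (rule sum.distrib)
    also have "(\<Sum>i=1..n. \<Sum>j\<in>{1..n}-{i}. prob (A i \<inter> A j)) \<le> (\<Sum>i=1..n. real n * (r * ?p))"
      by (rule sum_mono) (rule pairb)
    also have "(\<Sum>i=1..n. real n * (r * ?p)) = e * ?p" unfolding r_def using n2 by simp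
    finally have up: "(\<Sum>i=1..n. prob (A i)) \<le> (1 + e) * ?p" using sD by (simp add: algebra_simps)
    have "(1 - e) * ?p \<le> ?p" using e p0 by (simp add: algebra_simps)
    then show "(1 - e) * ?p \<le> (\<Sum>i=1..n. prob {w\<in>space M. C 0 w * X i w > x}) \<and>
      (\<Sum>i=1..n. prob {w\<in>space M. C 0 w * X i w > x}) \<le> (1 + e) * ?p"
      using low up unfolding A_def by simp
  qed
qed

end

locale base =
  fixes M :: "'a measure" and n :: nat and X :: "nat \<Rightarrow> 'a \<Rightarrow> real"
  assumes P: "prob_space M"
    and n2: "n \<ge> 2"
    and Xmeas: "\<And>i. i \<in> {1..n} \<Longrightarrow> X i \<in> borel_measurable M"
begin

sublocale prob_space M by (rule P)

abbreviation "F \<equiv> tail M (ord_stat X n n)"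

lemma os_meas: "1 \<le> k \<Longrightarrow> k \<le> n \<Longrightarrow> ord_stat X n k \<in> borel_measurable M"
  by (rule ord_stat_measurable[OF Xmeas])

lemma Mmeas: "ord_stat X n n \<in> borel_measurable M" using n2 by (intro os_meas) auto

lemma F_anti: "x \<le> y \<Longrightarrow> F y \<le> F x"
  unfolding tail_def
proof -
  assume xy: "x \<le> y"
  have "{w \<in> space M. x < ord_stat X n n w} \<in> events"
    using Mmeas[unfolded borel_measurable_iff_greater] by blast
  then show "prob {w \<in> space M. y < ord_stat X n n w} \<le> prob {w \<in> space M. x < ord_stat X n n w}"
    using xy by (intro finite_measure_mono) auto
qed

lemma F_nonneg: "0 \<le> F x" unfolding tail_def by simp

lemma F_zero: "(F \<longlongrightarrow> 0) at_top"
proof -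
  interpret D: real_distribution "distr M borel (ord_stat X n n)"
    using Mmeas by (intro real_distribution_distr) simp
  have eq: "F x = 1 - cdf (distr M borel (ord_stat X n n)) x" for x
  proof -
    have "cdf (distr M borel (ord_stat X n n)) x = prob {w \<in> space M. ord_stat X n n w \<le> x}"
      unfolding cdf_def using Mmeas by (subst measure_distr) (auto intro!: arg_cong[where f=prob])
    also have "{w \<in> space M. ord_stat X n n w \<le> x} = space M - {w \<in> space M. x < ord_stat X n n w}" by auto
    also have "prob \<dots> = 1 - F x" unfolding tail_def
      using Mmeas[unfolded borel_measurable_iff_greater] by (subst prob_compl) auto
    finally show ?thesis by simp
  qed
  have "((\<lambda>x. 1 - cdf (distr M borel (ord_stat X n n)) x) \<longlongrightarrow> 1 - 1) at_top"
    by (intro tendsto_intros D.cdf_lim_at_top_prob)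
  then show ?thesis unfolding eq[symmetric] by simp
qed

lemma union2_le:
  assumes fin: "finite I" "\<And>i. i \<in> I \<Longrightarrow> finite (J i)"
    and E: "\<And>i j. i \<in> I \<Longrightarrow> j \<in> J i \<Longrightarrow> E i j \<in> events"
  shows "prob (\<Union>i\<in>I. \<Union>j\<in>J i. E i j) \<le> (\<Sum>i\<in>I. \<Sum>j\<in>J i. prob (E i j))"
proof -
  have U: "(\<Union>j\<in>J i. E i j) \<in> events" if "i \<in> I" for i
    using that E fin by (intro sets.finite_UN) auto
  have "prob (\<Union>i\<in>I. \<Union>j\<in>J i. E i j) \<le> (\<Sum>i\<in>I. prob (\<Union>j\<in>J i. E i j))"
    using fin U by (intro finite_measure_subadditive_finite) auto
  also have "\<dots> \<le> (\<Sum>i\<in>I. \<Sum>j\<in>J i. prob (E i j))"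
    using fin E by (intro sum_mono finite_measure_subadditive_finite) auto
  finally show ?thesis .
qed

lemma G_lemma:
  fixes z h :: "real \<Rightarrow> real" and D \<Lambda> \<delta> :: real
  assumes Fpos: "eventually (\<lambda>y. 0 < F y) at_top"
    and star: "\<And>i j t. i\<in>{1..n} \<Longrightarrow> j\<in>{1..n} \<Longrightarrow> i \<noteq> j \<Longrightarrow> t > 0 \<Longrightarrow>
       ((\<lambda>x. prob {w\<in>space M. \<bar>X i w\<bar> > t * h x \<and> X j w > x} / F x) \<longlongrightarrow> 0) at_top"
    and z: "filterlim z at_top at_top"
    and FD: "eventually (\<lambda>y. F (z y) \<le> D * F y) at_top"
    and hz: "eventually (\<lambda>y. h (z y) \<le> \<Lambda> * h y) at_top"
    and \<Lambda>: "0 < \<Lambda>" and \<delta>: "0 < \<delta>"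
  shows "((\<lambda>y. prob {w\<in>space M. \<exists>i\<in>{1..n}. \<exists>j\<in>{1..n}. i \<noteq> j \<and> \<delta> * h y < X i w \<and> z y < X j w}
           / F y) \<longlongrightarrow> 0) at_top"
proof -
  define t where "t = \<delta> / \<Lambda>"
  have t0: "0 < t" unfolding t_def using \<delta> \<Lambda> by simp
  define g where "g = (\<lambda>i j x. prob {w\<in>space M. \<bar>X i w\<bar> > t * h x \<and> X j w > x})"
  define D' where "D' = max D 0"
  define S where "S = (\<lambda>y. \<Sum>i\<in>{1..n}. \<Sum>j\<in>{1..n}-{i}. g i j (z y) / F (z y))"
  have lim: "((\<lambda>y. g i j (z y) / F (z y)) \<longlongrightarrow> 0) at_top" if "i \<in> {1..n}" "j \<in> {1..n}-{i}" for i j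
  proof -
    have "((\<lambda>x. g i j x / F x) \<longlongrightarrow> 0) at_top" unfolding g_def using that t0 by (intro star) auto
    then show ?thesis by (rule filterlim_compose[OF _ z])
  qed
  have S0: "(S \<longlongrightarrow> 0) at_top" unfolding S_def
    using lim by (intro tendsto_null_sum) auto
  have DS: "((\<lambda>y. D' * S y) \<longlongrightarrow> 0) at_top" using tendsto_mult_right_zero[OF S0] .
  have Fz: "eventually (\<lambda>y. 0 < F (z y)) at_top"
    using z[unfolded filterlim_iff] Fpos by blast
  have Es: "\<And>i j x. i \<in> {1..n} \<Longrightarrow> j \<in> {1..n} \<Longrightarrow> {w\<in>space M. \<bar>X i w\<bar> > t * h x \<and> X j w > x} \<in> events"
  proof -
    fix i j x assume "i \<in> {1..n}" "j \<in> {1..n}"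
    then have [measurable]: "X i \<in> borel_measurable M" "X j \<in> borel_measurable M" by (auto intro!: Xmeas)
    show "{w\<in>space M. \<bar>X i w\<bar> > t * h x \<and> X j w > x} \<in> events" by measurable
  qed
  show ?thesis
  proof (rule tendsto_sandwich[OF _ _ tendsto_const DS])
    show "eventually (\<lambda>y. 0 \<le> prob {w\<in>space M. \<exists>i\<in>{1..n}. \<exists>j\<in>{1..n}. i \<noteq> j \<and> \<delta> * h y < X i w \<and> z y < X j w} / F y) at_top"
      by (intro always_eventually allI divide_nonneg_nonneg measure_nonneg F_nonneg)
    show "eventually (\<lambda>y. prob {w\<in>space M. \<exists>i\<in>{1..n}. \<exists>j\<in>{1..n}. i \<noteq> j \<and> \<delta> * h y < X i w \<and> z y < X j w} / F y
        \<le> D' * S y) at_top"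
      using Fpos Fz FD hz
    proof eventually_elim
      case (elim y)
      have sub: "{w\<in>space M. \<exists>i\<in>{1..n}. \<exists>j\<in>{1..n}. i \<noteq> j \<and> \<delta> * h y < X i w \<and> z y < X j w}
          \<subseteq> (\<Union>i\<in>{1..n}. \<Union>j\<in>{1..n}-{i}. {w\<in>space M. \<bar>X i w\<bar> > t * h (z y) \<and> X j w > z y})"
      proof
        fix w assume "w \<in> {w\<in>space M. \<exists>i\<in>{1..n}. \<exists>j\<in>{1..n}. i \<noteq> j \<and> \<delta> * h y < X i w \<and> z y < X j w}"
        then obtain i j where w: "w \<in> space M" "i \<in> {1..n}" "j \<in> {1..n}" "i \<noteq> j" "\<delta> * h y < X i w" "z y < X j w"
          by blast
        have "t * h (z y) \<le> t * (\<Lambda> * h y)" using elim(4) t0 by (intro mult_left_mono) auto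
        also have "\<dots> = \<delta> * h y" unfolding t_def using \<Lambda> by simp
        finally have "t * h (z y) < \<bar>X i w\<bar>" using w(5) by linarith
        then show "w \<in> (\<Union>i\<in>{1..n}. \<Union>j\<in>{1..n}-{i}. {w\<in>space M. \<bar>X i w\<bar> > t * h (z y) \<and> X j w > z y})"
          using w by blast
      qed
      have "prob {w\<in>space M. \<exists>i\<in>{1..n}. \<exists>j\<in>{1..n}. i \<noteq> j \<and> \<delta> * h y < X i w \<and> z y < X j w}
          \<le> prob (\<Union>i\<in>{1..n}. \<Union>j\<in>{1..n}-{i}. {w\<in>space M. \<bar>X i w\<bar> > t * h (z y) \<and> X j w > z y})"
        using sub Es by (intro finite_measure_mono sets.finite_UN) auto
      also have "\<dots> \<le> (\<Sum>i\<in>{1..n}. \<Sum>j\<in>{1..n}-{i}. g i j (z y))"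
        unfolding g_def using Es by (intro union2_le) auto
      also have "\<dots> = (\<Sum>i\<in>{1..n}. \<Sum>j\<in>{1..n}-{i}. g i j (z y) / F (z y)) * F (z y)"
        using elim(2) by (simp add: sum_distrib_right)
      also have "\<dots> \<le> S y * (D' * F y)"
      proof (rule mult_mono)
        show "(\<Sum>i\<in>{1..n}. \<Sum>j\<in>{1..n}-{i}. g i j (z y) / F (z y)) \<le> S y" unfolding S_def ..
        show "F (z y) \<le> D' * F y" using elim(3) F_nonneg[of y] unfolding D'_def
          by (smt (verit) mult_right_mono max.cobounded1)
        show "0 \<le> S y" unfolding S_def g_def
          by (intro sum_nonneg divide_nonneg_nonneg measure_nonneg F_nonneg)
        show "0 \<le> F (z y)" by (rule F_nonneg)
      qed
      finally show ?case using elim(1) by (simp add: pos_divide_le_eq mult_ac)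
    qed
  qed
qed

lemma exset_eq: "{w\<in>space M. \<exists>i\<in>I. \<exists>j\<in>J i. Q i j w} = (\<Union>i\<in>I. \<Union>j\<in>J i. {w\<in>space M. Q i j w})"
  by blast

lemma F3_AB:
  fixes h :: "real \<Rightarrow> real" and L :: real
  assumes Fpos: "eventually (\<lambda>y. 0 < F y) at_top"
    and star: "\<And>i j t. i\<in>{1..n} \<Longrightarrow> j\<in>{1..n} \<Longrightarrow> i \<noteq> j \<Longrightarrow> t > 0 \<Longrightarrow>
       ((\<lambda>x. prob {w\<in>space M. \<bar>X i w\<bar> > t * h x \<and> X j w > x} / F x) \<longlongrightarrow> 0) at_top"
    and hpos: "eventually (\<lambda>y. 0 < h y) at_top"
    and L: "0 < L"
    and star2: "\<And>i j. i\<in>{1..n} \<Longrightarrow> j\<in>{1..n} \<Longrightarrow> i < j \<Longrightarrow>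
       ((\<lambda>x. prob {w\<in>space M. X i w > L * h x \<and> X j w > L * h x} / F x) \<longlongrightarrow> 0) at_top"
    and zc: "\<And>\<kappa>. 0 \<le> \<kappa> \<Longrightarrow> filterlim (\<lambda>y. y - \<kappa> * h y) at_top at_top \<and>
        (\<exists>D. eventually (\<lambda>y. F (y - \<kappa> * h y) \<le> D * F y) at_top) \<and>
        (\<exists>\<Lambda>>0. eventually (\<lambda>y. h (y - \<kappa> * h y) \<le> \<Lambda> * h y) at_top)"
    and K: "0 \<le> K" and \<delta>: "0 < \<delta>"
  shows "((\<lambda>y. prob {w\<in>space M. \<delta> * h y < ord_stat X n (n-1) w \<and>
           y < ord_stat X n n w + K * ord_stat X n (n-1) w} / F y) \<longlongrightarrow> 0) at_top"
proof -
  define z where "z = (\<lambda>y. y - (K * L) * h y)"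
  have KL: "0 \<le> K * L" using K L by simp
  obtain D \<Lambda> where zlim: "filterlim z at_top at_top" and FD: "eventually (\<lambda>y. F (z y) \<le> D * F y) at_top"
    and \<Lambda>: "0 < \<Lambda>" and hz: "eventually (\<lambda>y. h (z y) \<le> \<Lambda> * h y) at_top"
    using zc[OF KL] unfolding z_def by blast
  define Ez where "Ez = (\<lambda>y. {w\<in>space M. \<exists>i\<in>{1..n}. \<exists>j\<in>{1..n}. i \<noteq> j \<and> \<delta> * h y < X i w \<and> z y < X j w})"
  have limz: "((\<lambda>y. prob (Ez y) / F y) \<longlongrightarrow> 0) at_top"
    unfolding Ez_def by (rule G_lemma[OF Fpos star zlim FD hz \<Lambda> \<delta>]) auto
  define EL where "EL = (\<lambda>y i j. {w\<in>space M. X i w > L * h y \<and> X j w > L * h y})"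
  define SL where "SL = (\<lambda>y. \<Sum>i\<in>{1..n}. \<Sum>j\<in>{j\<in>{1..n}. i < j}. prob (EL y i j) / F y)"
  have limL: "(SL \<longlongrightarrow> 0) at_top" unfolding SL_def EL_def
    by (intro tendsto_null_sum star2) auto
  have ELs: "EL y i j \<in> events" if "i \<in> {1..n}" "j \<in> {1..n}" for y i j
  proof -
    have [measurable]: "X i \<in> borel_measurable M" "X j \<in> borel_measurable M" using that by (auto intro!: Xmeas)
    show ?thesis unfolding EL_def by measurable
  qed
  have Ezs: "Ez y \<in> events" for y
  proof -
    have "Ez y = (\<Union>i\<in>{1..n}. \<Union>j\<in>{1..n}. {w\<in>space M. i \<noteq> j \<and> \<delta> * h y < X i w \<and> z y < X j w})"
      unfolding Ez_def by (rule exset_eq)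
    also have "\<dots> \<in> events"
    proof (intro sets.finite_UN ballI finite_atLeastAtMost)
      fix i j assume ij: "i \<in> {1..n}" "j \<in> {1..n}"
      have [measurable]: "X i \<in> borel_measurable M" "X j \<in> borel_measurable M" using ij by (auto intro!: Xmeas)
      show "{w\<in>space M. i \<noteq> j \<and> \<delta> * h y < X i w \<and> z y < X j w} \<in> events" by measurable
    qed
    finally show ?thesis .
  qed
  show ?thesis
  proof (rule tendsto_sandwich[OF _ _ tendsto_const])
    show "eventually (\<lambda>y. 0 \<le> prob {w\<in>space M. \<delta> * h y < ord_stat X n (n-1) w \<and>
           y < ord_stat X n n w + K * ord_stat X n (n-1) w} / F y) at_top"
      by (intro always_eventually allI divide_nonneg_nonneg measure_nonneg F_nonneg)
    show "((\<lambda>y. SL y + prob (Ez y) / F y) \<longlongrightarrow> 0) at_top"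
      using tendsto_add[OF limL limz] by simp
    show "eventually (\<lambda>y. prob {w\<in>space M. \<delta> * h y < ord_stat X n (n-1) w \<and>
           y < ord_stat X n n w + K * ord_stat X n (n-1) w} / F y \<le> SL y + prob (Ez y) / F y) at_top"
      using Fpos hpos
    proof eventually_elim
      case (elim y)
      define UL where "UL = (\<Union>i\<in>{1..n}. \<Union>j\<in>{j\<in>{1..n}. i < j}. EL y i j)"
      have ULs: "UL \<in> events" unfolding UL_def using ELs by (intro sets.finite_UN) auto
      have sub: "{w\<in>space M. \<delta> * h y < ord_stat X n (n-1) w \<and>
           y < ord_stat X n n w + K * ord_stat X n (n-1) w} \<subseteq> UL \<union> Ez y"
      proof
        fix w assume "w \<in> {w\<in>space M. \<delta> * h y < ord_stat X n (n-1) w \<and>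
           y < ord_stat X n n w + K * ord_stat X n (n-1) w}"
        then have ws: "w \<in> space M" and s1: "\<delta> * h y < ord_stat X n (n-1) w"
          and s2: "y < ord_stat X n n w + K * ord_stat X n (n-1) w" by auto
        show "w \<in> UL \<union> Ez y"
        proof (cases "L * h y < ord_stat X n (n-1) w")
          case True
          from ord_stat_second_gt[OF n2 True] obtain i i' where
            ii: "i \<in> {1..n}" "i' \<in> {1..n}" "i \<noteq> i'" "L * h y < X i w" "L * h y < X i' w" by blast
          show ?thesis
          proof (cases "i < i'")
            case True
            then have "w \<in> EL y i i'" unfolding EL_def using ws ii by auto
            then show ?thesis unfolding UL_def using ii(1,2) True by blast
          next
            case False
            then have lt: "i' < i" using ii(3) by simp
            then have "w \<in> EL y i' i" unfolding EL_def using ws ii by auto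
            then show ?thesis unfolding UL_def using ii(1,2) lt by blast
          qed
        next
          case False
          have "K * ord_stat X n (n-1) w \<le> K * (L * h y)" using False K by (intro mult_left_mono) auto
          then have Mz: "z y < ord_stat X n n w" using s2 unfolding z_def by (simp add: algebra_simps)
          have "\<exists>j\<in>{1..n}. ord_stat X n n w = X j w" using n2 by (intro ord_stat_in) auto
          then obtain j where j: "j \<in> {1..n}" "ord_stat X n n w = X j w" by metis
          from ord_stat_second_gt[OF n2 s1] obtain i i' where
            ii: "i \<in> {1..n}" "i' \<in> {1..n}" "i \<noteq> i'" "\<delta> * h y < X i w" "\<delta> * h y < X i' w" by blast
          have "\<exists>k\<in>{1..n}. k \<noteq> j \<and> \<delta> * h y < X k w"
          proof (cases "i = j")
            case True then show ?thesis using ii by (intro bexI[of _ i']) auto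
          next
            case False then show ?thesis using ii by (intro bexI[of _ i]) auto
          qed
          then obtain k where k: "k \<in> {1..n}" "k \<noteq> j" "\<delta> * h y < X k w" by blast
          have "X j w > z y" using Mz j(2) by simp
          then have "w \<in> Ez y" unfolding Ez_def using ws k j(1)
            by (intro CollectI conjI bexI[of _ k] bexI[of _ j]) auto
          then show ?thesis by blast
        qed
      qed
      have "prob {w\<in>space M. \<delta> * h y < ord_stat X n (n-1) w \<and>
           y < ord_stat X n n w + K * ord_stat X n (n-1) w} \<le> prob (UL \<union> Ez y)"
        using sub ULs Ezs by (intro finite_measure_mono) auto
      also have "\<dots> \<le> prob UL + prob (Ez y)" using ULs Ezs by (rule measure_Un_le)
      also have "prob UL \<le> (\<Sum>i\<in>{1..n}. \<Sum>j\<in>{j\<in>{1..n}. i < j}. prob (EL y i j))"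
        unfolding UL_def using ELs by (intro union2_le) auto
      also have "\<dots> = SL y * F y" unfolding SL_def using elim(1) by (simp add: sum_distrib_right)
      finally have "prob {w\<in>space M. \<delta> * h y < ord_stat X n (n-1) w \<and>
           y < ord_stat X n n w + K * ord_stat X n (n-1) w} \<le> SL y * F y + prob (Ez y)" by simp
      then show ?case using elim(1) by (simp add: pos_divide_le_eq algebra_simps)
    qed
  qed
qed

lemma F3_C:
  fixes h :: "real \<Rightarrow> real"
  assumes Fpos: "eventually (\<lambda>y. 0 < F y) at_top"
    and star: "\<And>i j t. i\<in>{1..n} \<Longrightarrow> j\<in>{1..n} \<Longrightarrow> i \<noteq> j \<Longrightarrow> t > 0 \<Longrightarrow>
       ((\<lambda>x. prob {w\<in>space M. \<bar>X i w\<bar> > t * h x \<and> X j w > x} / F x) \<longlongrightarrow> 0) at_top"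
    and hpos: "eventually (\<lambda>y. 0 < h y) at_top"
    and rc: "\<And>\<rho>. 0 < \<rho> \<Longrightarrow> \<rho> \<le> 1 \<Longrightarrow>
        (\<exists>D. eventually (\<lambda>y. F (\<rho> * y) \<le> D * F y) at_top) \<and>
        (\<exists>\<Lambda>>0. eventually (\<lambda>y. h (\<rho> * y) \<le> \<Lambda> * h y) at_top)"
    and K: "0 \<le> K" and \<delta>: "0 < \<delta>"
  shows "((\<lambda>y. prob {w\<in>space M. \<delta> * h y < ord_stat X n (n-1) w \<and>
           y < ord_stat X n n w + K * ord_stat X n (n-1) w} / F y) \<longlongrightarrow> 0) at_top"
proof -
  define \<rho> where "\<rho> = 1 / (1 + K)"
  have \<rho>: "0 < \<rho>" "\<rho> \<le> 1" unfolding \<rho>_def using K by auto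
  define z where "z = (\<lambda>y. \<rho> * y)"
  obtain D \<Lambda> where FD: "eventually (\<lambda>y. F (z y) \<le> D * F y) at_top"
    and \<Lambda>: "0 < \<Lambda>" and hz: "eventually (\<lambda>y. h (z y) \<le> \<Lambda> * h y) at_top"
    using rc[OF \<rho>] unfolding z_def by blast
  have zlim: "filterlim z at_top at_top" unfolding z_def using \<rho>(1)
    by (intro filterlim_tendsto_pos_mult_at_top[OF tendsto_const]) (auto simp: filterlim_ident)
  define Ez where "Ez = (\<lambda>y. {w\<in>space M. \<exists>i\<in>{1..n}. \<exists>j\<in>{1..n}. i \<noteq> j \<and> \<delta> * h y < X i w \<and> z y < X j w})"
  have limz: "((\<lambda>y. prob (Ez y) / F y) \<longlongrightarrow> 0) at_top"
    unfolding Ez_def by (rule G_lemma[OF Fpos star zlim FD hz \<Lambda> \<delta>]) auto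
  have Ezs: "Ez y \<in> events" for y
  proof -
    have "Ez y = (\<Union>i\<in>{1..n}. \<Union>j\<in>{1..n}. {w\<in>space M. i \<noteq> j \<and> \<delta> * h y < X i w \<and> z y < X j w})"
      unfolding Ez_def by (rule exset_eq)
    also have "\<dots> \<in> events"
    proof (intro sets.finite_UN ballI finite_atLeastAtMost)
      fix i j assume ij: "i \<in> {1..n}" "j \<in> {1..n}"
      have [measurable]: "X i \<in> borel_measurable M" "X j \<in> borel_measurable M" using ij by (auto intro!: Xmeas)
      show "{w\<in>space M. i \<noteq> j \<and> \<delta> * h y < X i w \<and> z y < X j w} \<in> events" by measurable
    qed
    finally show ?thesis .
  qed
  show ?thesis
  proof (rule tendsto_sandwich[OF _ _ tendsto_const limz])
    show "eventually (\<lambda>y. 0 \<le> prob {w\<in>space M. \<delta> * h y < ord_stat X n (n-1) w \<and>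
           y < ord_stat X n n w + K * ord_stat X n (n-1) w} / F y) at_top"
      by (intro always_eventually allI divide_nonneg_nonneg measure_nonneg F_nonneg)
    show "eventually (\<lambda>y. prob {w\<in>space M. \<delta> * h y < ord_stat X n (n-1) w \<and>
           y < ord_stat X n n w + K * ord_stat X n (n-1) w} / F y \<le> prob (Ez y) / F y) at_top"
      using Fpos hpos
    proof eventually_elim
      case (elim y)
      have sub: "{w\<in>space M. \<delta> * h y < ord_stat X n (n-1) w \<and>
           y < ord_stat X n n w + K * ord_stat X n (n-1) w} \<subseteq> Ez y"
      proof
        fix w assume "w \<in> {w\<in>space M. \<delta> * h y < ord_stat X n (n-1) w \<and>
           y < ord_stat X n n w + K * ord_stat X n (n-1) w}"
        then have ws: "w \<in> space M" and s1: "\<delta> * h y < ord_stat X n (n-1) w"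
          and s2: "y < ord_stat X n n w + K * ord_stat X n (n-1) w" by auto
        have "\<exists>i\<in>{1..n}. ord_stat X n (n-1) w = X i w" using n2 by (intro ord_stat_in) auto
        then obtain i0 where i0: "i0 \<in> {1..n}" "ord_stat X n (n-1) w = X i0 w" by metis
        have sM: "ord_stat X n (n-1) w \<le> ord_stat X n n w" using ord_stat_max_ge[OF i0(1)] i0(2) by simp
        have "K * ord_stat X n (n-1) w \<le> K * ord_stat X n n w" using sM K by (rule mult_left_mono)
        then have "y < (1 + K) * ord_stat X n n w" using s2 by (simp add: algebra_simps)
        then have Mz: "z y < ord_stat X n n w" unfolding z_def \<rho>_def using K
          by (simp add: divide_less_eq mult.commute)
        have "\<exists>j\<in>{1..n}. ord_stat X n n w = X j w" using n2 by (intro ord_stat_in) auto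
        then obtain j where j: "j \<in> {1..n}" "ord_stat X n n w = X j w" by metis
        from ord_stat_second_gt[OF n2 s1] obtain i i' where
          ii: "i \<in> {1..n}" "i' \<in> {1..n}" "i \<noteq> i'" "\<delta> * h y < X i w" "\<delta> * h y < X i' w" by blast
        have "\<exists>k\<in>{1..n}. k \<noteq> j \<and> \<delta> * h y < X k w"
        proof (cases "i = j")
          case True then show ?thesis using ii by (intro bexI[of _ i']) auto
        next
          case False then show ?thesis using ii by (intro bexI[of _ i]) auto
        qed
        then obtain k where k: "k \<in> {1..n}" "k \<noteq> j" "\<delta> * h y < X k w" by blast
        have "X j w > z y" using Mz j(2) by simp
        then show "w \<in> Ez y" unfolding Ez_def using ws k j(1)
          by (intro CollectI conjI bexI[of _ k] bexI[of _ j]) auto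
      qed
      have "prob {w\<in>space M. \<delta> * h y < ord_stat X n (n-1) w \<and>
           y < ord_stat X n n w + K * ord_stat X n (n-1) w} \<le> prob (Ez y)"
        using sub Ezs by (intro finite_measure_mono) auto
      then show ?case using elim(1) by (intro divide_right_mono) auto
    qed
  qed
qed

end

lemma limsup_bound:
  fixes f :: "real \<Rightarrow> real"
  assumes "Limsup at_top (\<lambda>x. ereal (f x)) < \<infinity>"
  shows "\<exists>B>0. eventually (\<lambda>x. f x < B) at_top"
proof -
  obtain B where B: "Limsup at_top (\<lambda>x. ereal (f x)) < ereal B"
  proof (cases "Limsup at_top (\<lambda>x. ereal (f x))")
    case (real r) then show ?thesis using that[of "r + 1"] by simp
  next
    case PInf then show ?thesis using assms by simp
  next
    case MInf then show ?thesis using that[of 0] by simp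
  qed
  have "eventually (\<lambda>x. ereal (f x) < ereal B) at_top" using Limsup_lessD[OF B] .
  then have "eventually (\<lambda>x. f x < max B 1) at_top" by (rule eventually_mono) auto
  then show ?thesis by (intro exI[of _ "max B 1"]) auto
qed

lemma ratio_bound_ev:
  fixes f g :: "real \<Rightarrow> real"
  assumes lim: "((\<lambda>x. f x / g x) \<longlongrightarrow> L) at_top" and gp: "eventually (\<lambda>x. 0 < g x) at_top"
    and L: "L < U"
  shows "eventually (\<lambda>x. f x \<le> U * g x) at_top"
proof -
  have "eventually (\<lambda>x. f x / g x < U) at_top" using lim L by (rule order_tendstoD)
  with gp show ?thesis by eventually_elim (simp add: pos_divide_less_eq)
qed

lemma ratio_bound_ev2:
  fixes f g :: "real \<Rightarrow> real"
  assumes lim: "((\<lambda>x. f x / g x) \<longlongrightarrow> L) at_top" and gp: "eventually (\<lambda>x. 0 < g x) at_top"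
    and L: "U < L"
  shows "eventually (\<lambda>x. U * g x \<le> f x) at_top"
proof -
  have "eventually (\<lambda>x. U < f x / g x) at_top" using lim L by (rule order_tendstoD)
  with gp show ?thesis by eventually_elim (simp add: pos_less_divide_eq)
qed

context base
begin

lemma evFpos_of: "(\<forall>y\<ge>0. 0 < F y) \<Longrightarrow> eventually (\<lambda>y. 0 < F y) at_top"
  using eventually_ge_at_top[of "0::real"] by (rule eventually_mono) auto

lemma equiv_ratio:
  assumes "(\<lambda>x. F (x + c * h x)) \<sim>[at_top] F" "eventually (\<lambda>y. 0 < F y) at_top"
  shows "((\<lambda>x. F (x + c * h x) / F x) \<longlongrightarrow> 1) at_top"
  using assms(2) by (intro asymp_equivD_strong[OF assms(1)]) (auto elim: eventually_mono)

lemma BC_hsmall: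
  fixes h :: "real \<Rightarrow> real"
  assumes "h \<in> o[at_top](\<lambda>x. x)"
  shows "eventually (\<lambda>y. h y < y) at_top"
proof -
  have "eventually (\<lambda>x. norm (h x) \<le> (1/2) * norm x) at_top"
    using landau_o.smallD[OF assms, of "1/2"] by simp
  then have "eventually (\<lambda>x. norm (h x) \<le> (1/2) * norm x \<and> 0 < x) at_top"
    using eventually_gt_at_top[of "0::real"] by (rule eventually_conj)
  then show ?thesis
  proof (rule eventually_mono)
    fix x :: real assume a: "norm (h x) \<le> (1/2) * norm x \<and> 0 < x"
    then show "h x < x" by auto
  qed
qed

lemma BC_F1:
  assumes Fp: "eventually (\<lambda>y. 0 < F y) at_top"
    and H: "\<forall>y. (\<lambda>x. F (x + y * h x)) \<sim>[at_top] F" and eps: "0 < \<epsilon>"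
  shows "\<exists>\<eta>>0. eventually (\<lambda>y. F (y - \<eta> * h y) \<le> (1 + \<epsilon>) * F y \<and>
         (1 - \<epsilon>) * F y \<le> F (y + \<eta> * h y)) at_top"
proof (intro exI[of _ 1] conjI)
  have l1: "((\<lambda>x. F (x + (-1) * h x) / F x) \<longlongrightarrow> 1) at_top" by (rule equiv_ratio[OF spec[OF H] Fp])
  have l2: "((\<lambda>x. F (x + 1 * h x) / F x) \<longlongrightarrow> 1) at_top" by (rule equiv_ratio[OF spec[OF H] Fp])
  have e1: "eventually (\<lambda>x. F (x + (-1) * h x) \<le> (1 + \<epsilon>) * F x) at_top"
    by (rule ratio_bound_ev[OF l1 Fp]) (use eps in simp)
  have e2: "eventually (\<lambda>x. (1 - \<epsilon>) * F x \<le> F (x + 1 * h x)) at_top"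
    by (rule ratio_bound_ev2[OF l2 Fp]) (use eps in simp)
  show "eventually (\<lambda>y. F (y - 1 * h y) \<le> (1 + \<epsilon>) * F y \<and> (1 - \<epsilon>) * F y \<le> F (y + 1 * h y)) at_top"
    using e1 e2 by eventually_elim simp
qed simp

lemma B_zc:
  assumes Fp: "eventually (\<lambda>y. 0 < F y) at_top" and hp: "eventually (\<lambda>y. 0 < h y) at_top"
    and ho: "h \<in> o[at_top](\<lambda>x. x)"
    and H: "\<forall>y. (\<lambda>x. F (x + y * h x)) \<sim>[at_top] F"
    and HL: "\<forall>y. Limsup at_top (\<lambda>x. ereal (h (x + y * h x) / h x)) < \<infinity>"
    and \<kappa>: "0 \<le> \<kappa>"
  shows "filterlim (\<lambda>y. y - \<kappa> * h y) at_top at_top \<and>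
        (\<exists>D. eventually (\<lambda>y. F (y - \<kappa> * h y) \<le> D * F y) at_top) \<and>
        (\<exists>\<Lambda>>0. eventually (\<lambda>y. h (y - \<kappa> * h y) \<le> \<Lambda> * h y) at_top)"
proof (intro conjI)
  have "eventually (\<lambda>x. norm (h x) \<le> (1 / (2 * (\<kappa> + 1))) * norm x) at_top"
    using landau_o.smallD[OF ho, of "1 / (2 * (\<kappa> + 1))"] \<kappa> by simp
  then have "eventually (\<lambda>x. x / 2 \<le> x - \<kappa> * h x) at_top"
  proof (rule eventually_elim2[OF _ eventually_gt_at_top[of "0::real"]])
    fix x :: real assume elim: "norm (h x) \<le> 1 / (2 * (\<kappa> + 1)) * norm x" "0 < x"
    have "\<kappa> * h x \<le> \<kappa> * \<bar>h x\<bar>" using \<kappa> by (intro mult_left_mono) auto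
    also have "\<dots> \<le> \<kappa> * ((1 / (2 * (\<kappa> + 1))) * x)" using elim \<kappa> by (intro mult_left_mono) auto
    also have "\<dots> = (\<kappa> / (\<kappa> + 1)) * (x / 2)" by (simp add: field_simps)
    also have "\<dots> \<le> 1 * (x / 2)" using \<kappa> elim by (intro mult_right_mono) auto
    finally show "x / 2 \<le> x - \<kappa> * h x" by simp
  qed
  moreover have "filterlim (\<lambda>x::real. x / 2) at_top at_top"
  proof -
    have "filterlim (\<lambda>x::real. (1/2) * x) at_top at_top"
      by (intro filterlim_tendsto_pos_mult_at_top[OF tendsto_const]) (auto simp: filterlim_ident)
    then show ?thesis by simp
  qed
  ultimately show "filterlim (\<lambda>y. y - \<kappa> * h y) at_top at_top" by (rule filterlim_at_top_mono[rotated])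
next
  have l: "((\<lambda>x. F (x + (-\<kappa>) * h x) / F x) \<longlongrightarrow> 1) at_top" by (rule equiv_ratio[OF spec[OF H] Fp])
  have "eventually (\<lambda>x. F (x + (-\<kappa>) * h x) \<le> 2 * F x) at_top"
    by (rule ratio_bound_ev[OF l Fp]) simp
  then show "\<exists>D. eventually (\<lambda>y. F (y - \<kappa> * h y) \<le> D * F y) at_top"
    by (intro exI[of _ 2]) simp
next
  obtain B where B: "0 < B" "eventually (\<lambda>x. h (x + (-\<kappa>) * h x) / h x < B) at_top"
    using limsup_bound[OF spec[OF HL, of "-\<kappa>"]] by blast
  have "eventually (\<lambda>y. h (y - \<kappa> * h y) \<le> B * h y) at_top"
    using B(2) hp by eventually_elim (simp add: pos_divide_less_eq)
  then show "\<exists>\<Lambda>>0. eventually (\<lambda>y. h (y - \<kappa> * h y) \<le> \<Lambda> * h y) at_top"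
    using B(1) by blast
qed

end

context base
begin

lemma C_rc:
  fixes h :: "real \<Rightarrow> real"
  assumes Fp: "eventually (\<lambda>y. 0 < F y) at_top" and hp: "eventually (\<lambda>y. 0 < h y) at_top"
    and DF: "dominatedly_varying F" and Dh: "dominatedly_varying h"
    and \<rho>: "0 < \<rho>" "\<rho> \<le> 1"
  shows "(\<exists>D. eventually (\<lambda>y. F (\<rho> * y) \<le> D * F y) at_top) \<and>
        (\<exists>\<Lambda>>0. eventually (\<lambda>y. h (\<rho> * y) \<le> \<Lambda> * h y) at_top)"
proof (intro conjI)
  have "Limsup at_top (\<lambda>x. ereal (F (x * \<rho>) / F x)) < \<infinity>" using DF \<rho> unfolding dominatedly_varying_def by blast
  from limsup_bound[OF this] obtain B where B: "eventually (\<lambda>x. F (x * \<rho>) / F x < B) at_top" by blast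
  have "eventually (\<lambda>y. F (\<rho> * y) \<le> B * F y) at_top"
    using B Fp by eventually_elim (simp add: pos_divide_less_eq mult.commute)
  then show "\<exists>D. eventually (\<lambda>y. F (\<rho> * y) \<le> D * F y) at_top" by blast
next
  have "Limsup at_top (\<lambda>x. ereal (h (x * \<rho>) / h x)) < \<infinity>" using Dh \<rho> unfolding dominatedly_varying_def by blast
  from limsup_bound[OF this] obtain B where B: "0 < B" "eventually (\<lambda>x. h (x * \<rho>) / h x < B) at_top" by blast
  have "eventually (\<lambda>y. h (\<rho> * y) \<le> B * h y) at_top"
    using B(2) hp by eventually_elim (simp add: pos_divide_less_eq mult.commute)
  then show "\<exists>\<Lambda>>0. eventually (\<lambda>y. h (\<rho> * y) \<le> \<Lambda> * h y) at_top" using B(1) by blast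
qed

lemma A_Fpos:
  assumes "upper_endpoint F = \<infinity>"
  shows "0 < F y"
proof (rule ccontr)
  assume "\<not> 0 < F y"
  then have F0: "F y \<le> 0" by simp
  have "Sup {ereal x | x. F x > 0} \<le> ereal y"
  proof (rule Sup_least)
    fix u assume "u \<in> {ereal x | x. F x > 0}"
    then obtain x where x: "u = ereal x" "F x > 0" by blast
    have "x \<le> y"
    proof (rule ccontr)
      assume "\<not> x \<le> y"
      then have "F x \<le> F y" by (intro F_anti) simp
      then show False using x F0 by simp
    qed
    then show "u \<le> ereal y" using x by simp
  qed
  then show False using assms unfolding upper_endpoint_def by simp
qed

lemma A_gmda:
  assumes "upper_endpoint F = \<infinity>" "GMDA F h"
  shows "((\<lambda>x. F (x + y * h x) / F x) \<longlongrightarrow> exp (- y)) at_top"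
  using assms unfolding GMDA_def by simp

lemma A_hsmall:
  assumes E: "upper_endpoint F = \<infinity>" and G: "GMDA F h"
  shows "eventually (\<lambda>x. h x < x) at_top"
proof -
  have Fp: "eventually (\<lambda>y. 0 < F y) at_top" by (intro always_eventually allI A_Fpos[OF E])
  have l: "((\<lambda>x. F (x + (-1) * h x) / F x) \<longlongrightarrow> exp 1) at_top" using A_gmda[OF E G, of "-1"] by simp
  have e1: "eventually (\<lambda>x. F (x + (-1) * h x) \<le> 4 * F x) at_top"
    by (rule ratio_bound_ev[OF l Fp]) (use exp_le in simp)
  have F00: "0 < F 0 / 4" using A_Fpos[OF E, of 0] by simp
  have e2: "eventually (\<lambda>x. F x < F 0 / 4) at_top" using order_tendstoD(2)[OF F_zero F00] .
  have "eventually (\<lambda>x. F (x + (-1) * h x) \<le> 4 * F x \<and> F x < F 0 / 4 \<and> 0 \<le> x) at_top"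
    by (intro eventually_conj e1 e2 eventually_ge_at_top)
  then show ?thesis
  proof (rule eventually_mono)
    fix x assume a: "F (x + (-1) * h x) \<le> 4 * F x \<and> F x < F 0 / 4 \<and> 0 \<le> x"
    show "h x < x"
    proof (rule ccontr)
      assume "\<not> h x < x"
      then have "F 0 \<le> F (x + (-1) * h x)" by (intro F_anti) simp
      then show False using a by simp
    qed
  qed
qed

lemma A_F1:
  assumes E: "upper_endpoint F = \<infinity>" and G: "GMDA F h" and eps: "0 < \<epsilon>"
  shows "\<exists>\<eta>>0. eventually (\<lambda>y. F (y - \<eta> * h y) \<le> (1 + \<epsilon>) * F y \<and>
         (1 - \<epsilon>) * F y \<le> F (y + \<eta> * h y)) at_top"
proof -
  define \<eta> where "\<eta> = ln (1 + \<epsilon>/2)"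
  have \<eta>: "0 < \<eta>" unfolding \<eta>_def using eps by simp
  have ex1: "exp \<eta> = 1 + \<epsilon>/2" unfolding \<eta>_def using eps by simp
  have ex2: "exp (- \<eta>) = 1 / (1 + \<epsilon>/2)" using ex1 eps by (simp add: exp_minus field_simps)
  have Fp: "eventually (\<lambda>y. 0 < F y) at_top" by (intro always_eventually allI A_Fpos[OF E])
  have l1: "((\<lambda>x. F (x + (-\<eta>) * h x) / F x) \<longlongrightarrow> exp \<eta>) at_top" using A_gmda[OF E G, of "-\<eta>"] by simp
  have l2: "((\<lambda>x. F (x + \<eta> * h x) / F x) \<longlongrightarrow> exp (-\<eta>)) at_top" using A_gmda[OF E G, of "\<eta>"] by simp
  have e1: "eventually (\<lambda>x. F (x + (-\<eta>) * h x) \<le> (1 + \<epsilon>) * F x) at_top"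
    by (rule ratio_bound_ev[OF l1 Fp]) (use eps ex1 in simp)
  have lt: "1 - \<epsilon> < exp (-\<eta>)"
  proof -
    have "(1 - \<epsilon>) * (1 + \<epsilon>/2) < 1" using eps by (simp add: algebra_simps) (simp add: add_pos_nonneg)
    then show ?thesis unfolding ex2 using eps by (simp add: field_simps)
  qed
  have e2: "eventually (\<lambda>x. (1 - \<epsilon>) * F x \<le> F (x + \<eta> * h x)) at_top"
    by (rule ratio_bound_ev2[OF l2 Fp lt])
  show ?thesis using e1 e2 \<eta> by (intro exI[of _ \<eta>]) (auto elim: eventually_elim2)
qed

lemma A_zc:
  fixes h :: "real \<Rightarrow> real"
  assumes E: "upper_endpoint F = \<infinity>" and G: "GMDA F h" and hp: "\<forall>x. 0 < h x"
    and \<kappa>: "0 \<le> \<kappa>"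
  shows "filterlim (\<lambda>y. y - \<kappa> * h y) at_top at_top \<and>
        (\<exists>D. eventually (\<lambda>y. F (y - \<kappa> * h y) \<le> D * F y) at_top) \<and>
        (\<exists>\<Lambda>>0. eventually (\<lambda>y. h (y - \<kappa> * h y) \<le> \<Lambda> * h y) at_top)"
proof -
  define z where "z = (\<lambda>y. y - \<kappa> * h y)"
  have Fpa: "0 < F y" for y by (rule A_Fpos[OF E])
  have Fp: "eventually (\<lambda>y. 0 < F y) at_top" by (intro always_eventually allI Fpa)
  have l: "((\<lambda>x. F (z x) / F x) \<longlongrightarrow> exp \<kappa>) at_top"
    using A_gmda[OF E G, of "-\<kappa>"] unfolding z_def by simp
  have D: "eventually (\<lambda>y. F (z y) \<le> (exp \<kappa> + 1) * F y) at_top"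
    by (rule ratio_bound_ev[OF l Fp]) simp
  have Fz0: "((\<lambda>y. F (z y)) \<longlongrightarrow> 0) at_top"
  proof -
    have "((\<lambda>y. (F (z y) / F y) * F y) \<longlongrightarrow> exp \<kappa> * 0) at_top"
      by (rule tendsto_mult[OF l F_zero])
    moreover have "(F (z y) / F y) * F y = F (z y)" for y using Fpa[of y] by simp
    ultimately show ?thesis by simp
  qed
  have zlim: "filterlim z at_top at_top"
    unfolding filterlim_at_top
  proof
    fix B :: real
    have "eventually (\<lambda>y. F (z y) < F B) at_top" using order_tendstoD(2)[OF Fz0 Fpa[of B]] .
    then show "eventually (\<lambda>y. B \<le> z y) at_top"
    proof (rule eventually_mono)
      fix y assume a: "F (z y) < F B"
      show "B \<le> z y"
      proof (rule ccontr)
        assume "\<not> B \<le> z y"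
        then have "F B \<le> F (z y)" by (intro F_anti) simp
        then show False using a by simp
      qed
    qed
  qed
  define \<Lambda> where "\<Lambda> = \<kappa> + 3"
  have \<Lambda>0: "0 < \<Lambda>" unfolding \<Lambda>_def using \<kappa> by simp
  have r1: "((\<lambda>y. F (z y + 1 * h (z y)) / F (z y)) \<longlongrightarrow> exp (-1)) at_top"
    using filterlim_compose[OF A_gmda[OF E G, of 1] zlim] by simp
  have r2: "((\<lambda>y. F (y + 3 * h y) / F (z y)) \<longlongrightarrow> exp (-3) / exp \<kappa>) at_top"
  proof -
    have "((\<lambda>y. (F (y + 3 * h y) / F y) / (F (z y) / F y)) \<longlongrightarrow> exp (-3) / exp \<kappa>) at_top"
      by (rule tendsto_divide[OF A_gmda[OF E G, of 3] l]) simp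
    moreover have "(F (y + 3 * h y) / F y) / (F (z y) / F y) = F (y + 3 * h y) / F (z y)" for y
      using Fpa[of y] by simp
    ultimately show ?thesis by (simp only:)
  qed
  have c1: "exp (-2) < exp (-1::real)" by simp
  have c2: "exp (-3) / exp \<kappa> < exp (-2::real)"
  proof -
    have "exp (-3) / exp \<kappa> \<le> exp (-3::real)" using \<kappa> by (simp add: divide_le_eq)
    also have "\<dots> < exp (-2)" by simp
    finally show ?thesis .
  qed
  have e1: "eventually (\<lambda>y. exp (-2) < F (z y + 1 * h (z y)) / F (z y)) at_top"
    using order_tendstoD(1)[OF r1 c1] .
  have e2: "eventually (\<lambda>y. F (y + 3 * h y) / F (z y) < exp (-2)) at_top"
    using order_tendstoD(2)[OF r2 c2] .
  have hz: "eventually (\<lambda>y. h (z y) \<le> \<Lambda> * h y) at_top"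
    using e1 e2
  proof eventually_elim
    case (elim y)
    show ?case
    proof (rule ccontr)
      assume "\<not> h (z y) \<le> \<Lambda> * h y"
      then have "\<Lambda> * h y < h (z y)" by simp
      then have "y + 3 * h y \<le> z y + 1 * h (z y)" unfolding z_def \<Lambda>_def by (simp add: algebra_simps)
      then have "F (z y + 1 * h (z y)) \<le> F (y + 3 * h y)" by (rule F_anti)
      then have "F (z y + 1 * h (z y)) / F (z y) \<le> F (y + 3 * h y) / F (z y)"
        using Fpa[of "z y"] by (intro divide_right_mono) auto
      then show False using elim by simp
    qed
  qed
  show ?thesis using zlim D hz \<Lambda>0 unfolding z_def by blast
qed

end

context base
begin

lemma cases_core:
  assumes ab: "0 < a" "a \<le> b" and d: "0 \<le> d"
    and cases:
      "(\<exists>h. (\<forall>x. h x > 0) \<and>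
             upper_endpoint (tail M (ord_stat X n n)) = \<infinity> \<and>
             GMDA (tail M (ord_stat X n n)) h \<and>
             (\<forall>i\<in>{1..n}. \<forall>j\<in>{1..n}. i \<noteq> j \<longrightarrow> (\<forall>t>0.
                ((\<lambda>x. measure M {w \<in> space M. \<bar>X i w\<bar> > t * h x \<and> X j w > x}
                      / tail M (ord_stat X n n) x) \<longlongrightarrow> 0) at_top)) \<and>
             (\<exists>L>0. \<forall>i\<in>{1..n}. \<forall>j\<in>{1..n}. i < j \<longrightarrow>
                ((\<lambda>x. measure M {w \<in> space M. X i w > L * h x \<and> X j w > L * h x}
                      / tail M (ord_stat X n n) x) \<longlongrightarrow> 0) at_top))
       \<or>
       (long_tailed (tail M (ord_stat X n n)) \<and>
        (\<exists>h. H_class (tail M (ord_stat X n n)) h \<and>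
             (\<forall>i\<in>{1..n}. \<forall>j\<in>{1..n}. i \<noteq> j \<longrightarrow> (\<forall>t>0.
                ((\<lambda>x. measure M {w \<in> space M. \<bar>X i w\<bar> > t * h x \<and> X j w > x}
                      / tail M (ord_stat X n n) x) \<longlongrightarrow> 0) at_top)) \<and>
             (\<exists>L>0. \<forall>i\<in>{1..n}. \<forall>j\<in>{1..n}. i < j \<longrightarrow>
                ((\<lambda>x. measure M {w \<in> space M. X i w > L * h x \<and> X j w > L * h x}
                      / tail M (ord_stat X n n) x) \<longlongrightarrow> 0) at_top)))
       \<or>
       (long_tailed (tail M (ord_stat X n n)) \<and> dominatedly_varying (tail M (ord_stat X n n)) \<and>
        (\<exists>h. dominatedly_varying h \<and> H_class (tail M (ord_stat X n n)) h \<and>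
             (\<forall>i\<in>{1..n}. \<forall>j\<in>{1..n}. i \<noteq> j \<longrightarrow> (\<forall>t>0.
                ((\<lambda>x. measure M {w \<in> space M. \<bar>X i w\<bar> > t * h x \<and> X j w > x}
                      / tail M (ord_stat X n n) x) \<longlongrightarrow> 0) at_top))))"
  shows "\<exists>h. core M n X a b d h"
proof -
  have basics: "prob_space M" "n \<ge> 2" "\<And>i. i \<in> {1..n} \<Longrightarrow> X i \<in> borel_measurable M"
    by (rule P, rule n2, rule Xmeas)
  from cases show ?thesis
  proof (elim disjE exE conjE)
    fix h L assume hp: "\<forall>x. h x > 0" and E: "upper_endpoint F = \<infinity>" and G: "GMDA F h"
      and st: "\<forall>i\<in>{1..n}. \<forall>j\<in>{1..n}. i \<noteq> j \<longrightarrow> (\<forall>t>0.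
                ((\<lambda>x. measure M {w \<in> space M. \<bar>X i w\<bar> > t * h x \<and> X j w > x} / F x) \<longlongrightarrow> 0) at_top)"
      and L: "L > 0" and st2: "\<forall>i\<in>{1..n}. \<forall>j\<in>{1..n}. i < j \<longrightarrow>
                ((\<lambda>x. measure M {w \<in> space M. X i w > L * h x \<and> X j w > L * h x} / F x) \<longlongrightarrow> 0) at_top"
    have Fp: "eventually (\<lambda>y. 0 < F y) at_top" by (intro always_eventually allI A_Fpos[OF E])
    have hpe: "eventually (\<lambda>y. 0 < h y) at_top" using hp by simp
    have "core M n X a b d h"
    proof (unfold_locales)
      show "\<And>y. 0 \<le> y \<Longrightarrow> 0 < F y" by (rule A_Fpos[OF E])
      show "eventually (\<lambda>y. 0 < h y) at_top" by (rule hpe)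
      show "eventually (\<lambda>y. h y < y) at_top" by (rule A_hsmall[OF E G])
      show "\<And>\<epsilon>. \<epsilon> > 0 \<Longrightarrow> \<exists>\<eta>>0. eventually (\<lambda>y. F (y - \<eta> * h y) \<le> (1 + \<epsilon>) * F y \<and>
         (1 - \<epsilon>) * F y \<le> F (y + \<eta> * h y)) at_top" by (rule A_F1[OF E G])
      show "\<And>i j t. i \<in> {1..n} \<Longrightarrow> j \<in> {1..n} \<Longrightarrow> i \<noteq> j \<Longrightarrow> t > 0 \<Longrightarrow>
         ((\<lambda>x. measure M {w \<in> space M. \<bar>X i w\<bar> > t * h x \<and> X j w > x} / F x) \<longlongrightarrow> 0) at_top"
        by (rule st[rule_format])
      show "\<And>K \<delta>. 0 \<le> K \<Longrightarrow> 0 < \<delta> \<Longrightarrow> ((\<lambda>y. measure M {w\<in>space M.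
         \<delta> * h y < ord_stat X n (n-1) w \<and> y < ord_stat X n n w + K * ord_stat X n (n-1) w} / F y) \<longlongrightarrow> 0) at_top"
      proof -
        fix K \<delta> :: real assume K: "0 \<le> K" and \<delta>: "0 < \<delta>"
        show "((\<lambda>y. measure M {w\<in>space M.
         \<delta> * h y < ord_stat X n (n-1) w \<and> y < ord_stat X n n w + K * ord_stat X n (n-1) w} / F y) \<longlongrightarrow> 0) at_top"
        proof (rule F3_AB[OF Fp _ hpe L _ _ K \<delta>])
          show "\<And>i j t. i \<in> {1..n} \<Longrightarrow> j \<in> {1..n} \<Longrightarrow> i \<noteq> j \<Longrightarrow> t > 0 \<Longrightarrow>
            ((\<lambda>x. prob {w \<in> space M. \<bar>X i w\<bar> > t * h x \<and> X j w > x} / F x) \<longlongrightarrow> 0) at_top"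
            by (rule st[rule_format])
          show "\<And>i j. i \<in> {1..n} \<Longrightarrow> j \<in> {1..n} \<Longrightarrow> i < j \<Longrightarrow>
            ((\<lambda>x. prob {w \<in> space M. X i w > L * h x \<and> X j w > L * h x} / F x) \<longlongrightarrow> 0) at_top"
            by (rule st2[rule_format])
          show "\<And>\<kappa>. 0 \<le> \<kappa> \<Longrightarrow> filterlim (\<lambda>y. y - \<kappa> * h y) at_top at_top \<and>
            (\<exists>D. eventually (\<lambda>y. F (y - \<kappa> * h y) \<le> D * F y) at_top) \<and>
            (\<exists>\<Lambda>>0. eventually (\<lambda>y. h (y - \<kappa> * h y) \<le> \<Lambda> * h y) at_top)"
            by (rule A_zc[OF E G hp])
        qed
      qed
    qed (use basics ab d in auto)
    then show ?thesis by blast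
  next
    fix h L assume LT: "long_tailed F" and H: "H_class F h"
      and st: "\<forall>i\<in>{1..n}. \<forall>j\<in>{1..n}. i \<noteq> j \<longrightarrow> (\<forall>t>0.
                ((\<lambda>x. measure M {w \<in> space M. \<bar>X i w\<bar> > t * h x \<and> X j w > x} / F x) \<longlongrightarrow> 0) at_top)"
      and L: "L > 0" and st2: "\<forall>i\<in>{1..n}. \<forall>j\<in>{1..n}. i < j \<longrightarrow>
                ((\<lambda>x. measure M {w \<in> space M. X i w > L * h x \<and> X j w > L * h x} / F x) \<longlongrightarrow> 0) at_top"
    have Fpa: "\<forall>y\<ge>0. 0 < F y" using LT unfolding long_tailed_def by (rule conjunct1)
    have Fp: "eventually (\<lambda>y. 0 < F y) at_top" by (rule evFpos_of[OF Fpa])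
    have Hc: "eventually (\<lambda>y. 0 < h y) at_top \<and> h \<in> o[at_top](\<lambda>x. x) \<and>
      (\<forall>y. (\<lambda>x. F (x + y * h x)) \<sim>[at_top] F) \<and>
      (\<forall>y. Limsup at_top (\<lambda>x. ereal (h (x + y * h x) / h x)) < \<infinity>)"
      using H unfolding H_class_def .
    note hpe = Hc[THEN conjunct1] and ho = Hc[THEN conjunct2, THEN conjunct1]
      and HH = Hc[THEN conjunct2, THEN conjunct2, THEN conjunct1]
      and HL = Hc[THEN conjunct2, THEN conjunct2, THEN conjunct2]
    have "core M n X a b d h"
    proof (unfold_locales)
      show "\<And>y. 0 \<le> y \<Longrightarrow> 0 < F y" by (rule Fpa[rule_format])
      show "eventually (\<lambda>y. 0 < h y) at_top" by (rule hpe)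
      show "eventually (\<lambda>y. h y < y) at_top" by (rule BC_hsmall[OF ho])
      show "\<And>\<epsilon>. \<epsilon> > 0 \<Longrightarrow> \<exists>\<eta>>0. eventually (\<lambda>y. F (y - \<eta> * h y) \<le> (1 + \<epsilon>) * F y \<and>
         (1 - \<epsilon>) * F y \<le> F (y + \<eta> * h y)) at_top" by (rule BC_F1[OF Fp HH])
      show "\<And>i j t. i \<in> {1..n} \<Longrightarrow> j \<in> {1..n} \<Longrightarrow> i \<noteq> j \<Longrightarrow> t > 0 \<Longrightarrow>
         ((\<lambda>x. measure M {w \<in> space M. \<bar>X i w\<bar> > t * h x \<and> X j w > x} / F x) \<longlongrightarrow> 0) at_top"
        by (rule st[rule_format])
      show "\<And>K \<delta>. 0 \<le> K \<Longrightarrow> 0 < \<delta> \<Longrightarrow> ((\<lambda>y. measure M {w\<in>space M.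
         \<delta> * h y < ord_stat X n (n-1) w \<and> y < ord_stat X n n w + K * ord_stat X n (n-1) w} / F y) \<longlongrightarrow> 0) at_top"
      proof -
        fix K \<delta> :: real assume K: "0 \<le> K" and \<delta>: "0 < \<delta>"
        show "((\<lambda>y. measure M {w\<in>space M.
         \<delta> * h y < ord_stat X n (n-1) w \<and> y < ord_stat X n n w + K * ord_stat X n (n-1) w} / F y) \<longlongrightarrow> 0) at_top"
        proof (rule F3_AB[OF Fp _ hpe L _ _ K \<delta>])
          show "\<And>i j t. i \<in> {1..n} \<Longrightarrow> j \<in> {1..n} \<Longrightarrow> i \<noteq> j \<Longrightarrow> t > 0 \<Longrightarrow>
            ((\<lambda>x. prob {w \<in> space M. \<bar>X i w\<bar> > t * h x \<and> X j w > x} / F x) \<longlongrightarrow> 0) at_top"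
            by (rule st[rule_format])
          show "\<And>i j. i \<in> {1..n} \<Longrightarrow> j \<in> {1..n} \<Longrightarrow> i < j \<Longrightarrow>
            ((\<lambda>x. prob {w \<in> space M. X i w > L * h x \<and> X j w > L * h x} / F x) \<longlongrightarrow> 0) at_top"
            by (rule st2[rule_format])
          show "\<And>\<kappa>. 0 \<le> \<kappa> \<Longrightarrow> filterlim (\<lambda>y. y - \<kappa> * h y) at_top at_top \<and>
            (\<exists>D. eventually (\<lambda>y. F (y - \<kappa> * h y) \<le> D * F y) at_top) \<and>
            (\<exists>\<Lambda>>0. eventually (\<lambda>y. h (y - \<kappa> * h y) \<le> \<Lambda> * h y) at_top)"
            by (rule B_zc[OF Fp hpe ho HH HL])
        qed
      qed
    qed (use basics ab d in auto)
    then show ?thesis by blast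
  next
    fix h assume LT: "long_tailed F" and DF: "dominatedly_varying F" and Dh: "dominatedly_varying h"
      and H: "H_class F h"
      and st: "\<forall>i\<in>{1..n}. \<forall>j\<in>{1..n}. i \<noteq> j \<longrightarrow> (\<forall>t>0.
                ((\<lambda>x. measure M {w \<in> space M. \<bar>X i w\<bar> > t * h x \<and> X j w > x} / F x) \<longlongrightarrow> 0) at_top)"
    have Fpa: "\<forall>y\<ge>0. 0 < F y" using LT unfolding long_tailed_def by (rule conjunct1)
    have Fp: "eventually (\<lambda>y. 0 < F y) at_top" by (rule evFpos_of[OF Fpa])
    have Hc: "eventually (\<lambda>y. 0 < h y) at_top \<and> h \<in> o[at_top](\<lambda>x. x) \<and>
      (\<forall>y. (\<lambda>x. F (x + y * h x)) \<sim>[at_top] F) \<and>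
      (\<forall>y. Limsup at_top (\<lambda>x. ereal (h (x + y * h x) / h x)) < \<infinity>)"
      using H unfolding H_class_def .
    note hpe = Hc[THEN conjunct1] and ho = Hc[THEN conjunct2, THEN conjunct1]
      and HH = Hc[THEN conjunct2, THEN conjunct2, THEN conjunct1]
    have "core M n X a b d h"
    proof (unfold_locales)
      show "\<And>y. 0 \<le> y \<Longrightarrow> 0 < F y" by (rule Fpa[rule_format])
      show "eventually (\<lambda>y. 0 < h y) at_top" by (rule hpe)
      show "eventually (\<lambda>y. h y < y) at_top" by (rule BC_hsmall[OF ho])
      show "\<And>\<epsilon>. \<epsilon> > 0 \<Longrightarrow> \<exists>\<eta>>0. eventually (\<lambda>y. F (y - \<eta> * h y) \<le> (1 + \<epsilon>) * F y \<and>
         (1 - \<epsilon>) * F y \<le> F (y + \<eta> * h y)) at_top" by (rule BC_F1[OF Fp HH])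
      show "\<And>i j t. i \<in> {1..n} \<Longrightarrow> j \<in> {1..n} \<Longrightarrow> i \<noteq> j \<Longrightarrow> t > 0 \<Longrightarrow>
         ((\<lambda>x. measure M {w \<in> space M. \<bar>X i w\<bar> > t * h x \<and> X j w > x} / F x) \<longlongrightarrow> 0) at_top"
        by (rule st[rule_format])
      show "\<And>K \<delta>. 0 \<le> K \<Longrightarrow> 0 < \<delta> \<Longrightarrow> ((\<lambda>y. measure M {w\<in>space M.
         \<delta> * h y < ord_stat X n (n-1) w \<and> y < ord_stat X n n w + K * ord_stat X n (n-1) w} / F y) \<longlongrightarrow> 0) at_top"
      proof -
        fix K \<delta> :: real assume K: "0 \<le> K" and \<delta>: "0 < \<delta>"
        show "((\<lambda>y. measure M {w\<in>space M.
         \<delta> * h y < ord_stat X n (n-1) w \<and> y < ord_stat X n n w + K * ord_stat X n (n-1) w} / F y) \<longlongrightarrow> 0) at_top"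
        proof (rule F3_C[OF Fp _ hpe _ K \<delta>])
          show "\<And>i j t. i \<in> {1..n} \<Longrightarrow> j \<in> {1..n} \<Longrightarrow> i \<noteq> j \<Longrightarrow> t > 0 \<Longrightarrow>
            ((\<lambda>x. prob {w \<in> space M. \<bar>X i w\<bar> > t * h x \<and> X j w > x} / F x) \<longlongrightarrow> 0) at_top"
            by (rule st[rule_format])
          show "\<And>\<rho>. 0 < \<rho> \<Longrightarrow> \<rho> \<le> 1 \<Longrightarrow>
            (\<exists>D. eventually (\<lambda>y. F (\<rho> * y) \<le> D * F y) at_top) \<and>
            (\<exists>\<Lambda>>0. eventually (\<lambda>y. h (\<rho> * y) \<le> \<Lambda> * h y) at_top)"
            by (rule C_rc[OF Fp hpe DF Dh])
        qed
      qed
    qed (use basics ab d in auto)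
    then show ?thesis by blast
  qed
qed

end

theorem corollary3p2:
  fixes M :: "'a measure" and n :: nat and X C :: "nat \<Rightarrow> 'a \<Rightarrow> real"
    and a b d :: real
  assumes P: "prob_space M"
    and n2: "n \<ge> 2"
    and Xmeas: "\<And>i. i \<in> {1..n} \<Longrightarrow> X i \<in> borel_measurable M"
    and Cmeas: "\<And>i. i < n \<Longrightarrow> C i \<in> borel_measurable M"
    and cases:
      "(\<exists>h. (\<forall>x. h x > 0) \<and>
             upper_endpoint (tail M (ord_stat X n n)) = \<infinity> \<and>
             GMDA (tail M (ord_stat X n n)) h \<and>
             (\<forall>i\<in>{1..n}. \<forall>j\<in>{1..n}. i \<noteq> j \<longrightarrow> (\<forall>t>0.
                ((\<lambda>x. measure M {w \<in> space M. \<bar>X i w\<bar> > t * h x \<and> X j w > x}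
                      / tail M (ord_stat X n n) x) \<longlongrightarrow> 0) at_top)) \<and>
             (\<exists>L>0. \<forall>i\<in>{1..n}. \<forall>j\<in>{1..n}. i < j \<longrightarrow>
                ((\<lambda>x. measure M {w \<in> space M. X i w > L * h x \<and> X j w > L * h x}
                      / tail M (ord_stat X n n) x) \<longlongrightarrow> 0) at_top))
       \<or>
       (long_tailed (tail M (ord_stat X n n)) \<and>
        (\<exists>h. H_class (tail M (ord_stat X n n)) h \<and>
             (\<forall>i\<in>{1..n}. \<forall>j\<in>{1..n}. i \<noteq> j \<longrightarrow> (\<forall>t>0.
                ((\<lambda>x. measure M {w \<in> space M. \<bar>X i w\<bar> > t * h x \<and> X j w > x}
                      / tail M (ord_stat X n n) x) \<longlongrightarrow> 0) at_top)) \<and>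
             (\<exists>L>0. \<forall>i\<in>{1..n}. \<forall>j\<in>{1..n}. i < j \<longrightarrow>
                ((\<lambda>x. measure M {w \<in> space M. X i w > L * h x \<and> X j w > L * h x}
                      / tail M (ord_stat X n n) x) \<longlongrightarrow> 0) at_top)))
       \<or>
       (long_tailed (tail M (ord_stat X n n)) \<and> dominatedly_varying (tail M (ord_stat X n n)) \<and>
        (\<exists>h. dominatedly_varying h \<and> H_class (tail M (ord_stat X n n)) h \<and>
             (\<forall>i\<in>{1..n}. \<forall>j\<in>{1..n}. i \<noteq> j \<longrightarrow> (\<forall>t>0.
                ((\<lambda>x. measure M {w \<in> space M. \<bar>X i w\<bar> > t * h x \<and> X j w > x}
                      / tail M (ord_stat X n n) x) \<longlongrightarrow> 0) at_top))))"
    and indep: "prob_space.indep_var M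
        (Pi\<^sub>M {..<n} (\<lambda>_. borel)) (\<lambda>w. \<lambda>i\<in>{..<n}. C i w)
        (Pi\<^sub>M {1..n} (\<lambda>_. borel)) (\<lambda>w. \<lambda>i\<in>{1..n}. X i w)"
    and ab: "0 < a" "a \<le> b" and d: "0 \<le> d"
    and C0: "measure M {w \<in> space M. a \<le> C 0 w \<and> C 0 w \<le> b} = 1"
    and Ci: "(\<forall>i\<in>{1..n-1}. measure M {w \<in> space M. 0 \<le> C i w \<and> C i w \<le> d} = 1)
           \<or> ((\<forall>i\<in>{1..n}. AE w in M. X i w \<ge> 0) \<and>
              (\<forall>i\<in>{1..n-1}. measure M {w \<in> space M. \<bar>C i w\<bar> \<le> d} = 1))"
  shows "(\<lambda>x. measure M {w \<in> space M. (\<Sum>i=0..n-1. C i w * ord_stat X n (n - i) w) > x})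
           \<sim>[at_top] (\<lambda>x. measure M {w \<in> space M. C 0 w * ord_stat X n n w > x})
       \<and> (\<lambda>x. measure M {w \<in> space M. C 0 w * ord_stat X n n w > x})
           \<sim>[at_top] (\<lambda>x. \<Sum>i=1..n. measure M {w \<in> space M. C 0 w * X i w > x})"
proof -
  have B: "base M n X" by (rule base.intro[OF P n2 Xmeas])
  from base.cases_core[OF B ab d cases] obtain h where core: "core M n X a b d h" ..
  have CF: "core_full M n X a b d h C"
    by (rule core_full.intro[OF core core_full_axioms.intro[OF Cmeas indep C0 Ci]])
  show ?thesis by (rule conjI[OF core_full.concl1[OF CF] core_full.concl2[OF CF]])
qed

end
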